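(* Suppose $1/n\ll\varepsilon\ll\varepsilon_1\ll\eta_1\ll\tau\ll1$. Let $G$ be a digraph on $n$ vertices with $\delta^0(G)\geq n/2$ and let $A,B,S,T$ be a partition of $V(G)$ satisfying the $ABST$-conditions. Let $L_1,L_2$ be oriented paths of length eight, and for each $i\in\{1,2\}$ let $(X_i,Y_i)\in\{(A,B),(B,A)\}$ be prescribed. Then $G$ contains vertex-disjoint copies $L_1^G,L_2^G$ of $L_1,L_2$ such that each $L_i^G$ is a useful path and is an $X_iY_i$-path.
   Context: Digraphs have no loops and at most one edge in each direction between two vertices; $\delta^0$ is the minimum semidegree; $d^+_X(x)=|N^+(x)\cap X|$, $d^-_X(x)=|N^-(x)\cap X|$, $d^\pm_X(x)\geq c$ means both $\geq c$; $G[A,B]$ is the digraph on $A\cup B$ with edges of $G$ between $A$ and $B$ in either direction. The $ABST$-conditions on a partition $A,B,S,T$ of sizes $a,b,s,t$: $a\leq b$, $s\leq t$; $a,b,s,t\geq\tau n$; $|a-b|,|s-t|\leq\varepsilon_1 n$; $\delta^0(G[A,B])\geq\eta_1 n$; $d^+_{B\cup S}(x),d^-_{A\cup S}(x)\geq\eta_1 n$ for all $x\in S$; $d^+_{A\cup T}(x),d^-_{B\cup T}(x)\geq\eta_1n$ for all $x\in T$; $d^\pm_B(x)\geq b-\varepsilon^{1/3}n$ for all but at most $\varepsilon_1n$ vertices $x\in A$; $d^\pm_A(x)\geq a-\varepsilon^{1/3}n$ for all but at most $\varepsilon_1 n$ vertices $x\in B$; $d^+_{B\cup S}(x)\geq b+s-\varepsilon^{1/3}n$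 and $d^-_{A\cup S}(x)\geq a+s-\varepsilon^{1/3}n$ for all but at most $\varepsilon_1n$ vertices $x\in S$; $d^+_{A\cup T}(x)\geq a+t-\varepsilon^{1/3}n$ and $d^-_{B\cup T}(x)\geq b+t-\varepsilon^{1/3}n$ for all but at most $\varepsilon_1 n$ vertices $x\in T$. A copy of an oriented path is an injective edge- and orientation-preserving map into $G$; it is an $XY$-path if the initial vertex maps into $X$ and the final vertex into $Y$. For a path $x_1\dots x_q$ in $G$, consider the subsequence of its vertices in $A\cup B$; a vertex of this subsequence in $A$ (resp. $B$) whose predecessor in the subsequence is also in $A$ (resp. $B$) is a repeated $A$ (resp. repeated $B$). A path in $G$ is useful if it is an $AB$-path or a $BA$-path, has no repeated $A$s and no repeated $B$s, and contains an odd number of vertices of $S\cup T$. The hierarchy $\alpha\ll\beta$ means $\alpha$ is sufficiently small as a function of $\beta$. *)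

theory Defs
  imports Complex_Main
begin

text \<open>A digraph is a finite vertex set V with an edge relation E (E x y: edge from x to y),
  irreflexive (no loops) and contained in V. At most one edge in each direction is automatic.\<close>
definition digraph :: "'a set \<Rightarrow> ('a \<Rightarrow> 'a \<Rightarrow> bool) \<Rightarrow> bool" where
  "digraph V E \<longleftrightarrow> finite V \<and> (\<forall>x y. E x y \<longrightarrow> x \<in> V \<and> y \<in> V \<and> x \<noteq> y)"

definition outdeg_in :: "('a \<Rightarrow> 'a \<Rightarrow> bool) \<Rightarrow> 'a set \<Rightarrow> 'a \<Rightarrow> nat" where
  "outdeg_in E X x = card {y \<in> X. E x y}"

definition indeg_in :: "('a \<Rightarrow> 'a \<Rightarrow> bool) \<Rightarrow> 'a set \<Rightarrow> 'a \<Rightarrow> nat" where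
  "indeg_in E X x = card {y \<in> X. E y x}"

definition min_semideg_ge :: "'a set \<Rightarrow> ('a \<Rightarrow> 'a \<Rightarrow> bool) \<Rightarrow> real \<Rightarrow> bool" where
  "min_semideg_ge V E c \<longleftrightarrow>
     (\<forall>x\<in>V. real (outdeg_in E V x) \<ge> c \<and> real (indeg_in E V x) \<ge> c)"

definition ABST_conditions ::
  "'a set \<Rightarrow> ('a \<Rightarrow> 'a \<Rightarrow> bool) \<Rightarrow> 'a set \<Rightarrow> 'a set \<Rightarrow> 'a set \<Rightarrow> 'a set \<Rightarrow>
   nat \<Rightarrow> real \<Rightarrow> real \<Rightarrow> real \<Rightarrow> real \<Rightarrow> bool" where
  "ABST_conditions V E A B S T n \<tau> \<epsilon>\<^sub>1 \<eta>\<^sub>1 \<epsilon> \<longleftrightarrow>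
    (let a = real (card A); b = real (card B); s = real (card S); t = real (card T);
         r = \<epsilon> powr (1/3) * real n in
     a \<le> b \<and> s \<le> t \<and>
     a \<ge> \<tau> * real n \<and> b \<ge> \<tau> * real n \<and> s \<ge> \<tau> * real n \<and> t \<ge> \<tau> * real n \<and>
     \<bar>a - b\<bar> \<le> \<epsilon>\<^sub>1 * real n \<and> \<bar>s - t\<bar> \<le> \<epsilon>\<^sub>1 * real n \<and>
     (\<forall>x\<in>A. real (outdeg_in E B x) \<ge> \<eta>\<^sub>1 * real n \<and> real (indeg_in E B x) \<ge> \<eta>\<^sub>1 * real n) \<and>
     (\<forall>x\<in>B. real (outdeg_in E A x) \<ge> \<eta>\<^sub>1 * real n \<and> real (indeg_in E A x) \<ge> \<eta>\<^sub>1 * real n) \<and>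
     (\<forall>x\<in>S. real (outdeg_in E (B \<union> S) x) \<ge> \<eta>\<^sub>1 * real n \<and> real (indeg_in E (A \<union> S) x) \<ge> \<eta>\<^sub>1 * real n) \<and>
     (\<forall>x\<in>T. real (outdeg_in E (A \<union> T) x) \<ge> \<eta>\<^sub>1 * real n \<and> real (indeg_in E (B \<union> T) x) \<ge> \<eta>\<^sub>1 * real n) \<and>
     real (card {x\<in>A. \<not> (real (outdeg_in E B x) \<ge> b - r \<and> real (indeg_in E B x) \<ge> b - r)}) \<le> \<epsilon>\<^sub>1 * real n \<and>
     real (card {x\<in>B. \<not> (real (outdeg_in E A x) \<ge> a - r \<and> real (indeg_in E A x) \<ge> a - r)}) \<le> \<epsilon>\<^sub>1 * real n \<and>
     real (card {x\<in>S. \<not> (real (outdeg_in E (B \<union> S) x) \<ge> b + s - r \<and> real (indeg_in E (A \<union> S) x) \<ge> a + s - r)}) \<le> \<epsilon>\<^sub>1 * real n \<and>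
     real (card {x\<in>T. \<not> (real (outdeg_in E (A \<union> T) x) \<ge> a + t - r \<and> real (indeg_in E (B \<union> T) x) \<ge> b + t - r)}) \<le> \<epsilon>\<^sub>1 * real n)"

text \<open>An oriented path of length k is given by a list of k orientations:
  entry i = True means the i-th edge is directed from vertex i to vertex i+1,
  False means from vertex i+1 to vertex i.\<close>
definition is_copy :: "'a set \<Rightarrow> ('a \<Rightarrow> 'a \<Rightarrow> bool) \<Rightarrow> bool list \<Rightarrow> (nat \<Rightarrow> 'a) \<Rightarrow> bool" where
  "is_copy V E L f \<longleftrightarrow> inj_on f {0..length L} \<and> f ` {0..length L} \<subseteq> V \<and>
     (\<forall>i < length L. if L ! i then E (f i) (f (Suc i)) else E (f (Suc i)) (f i))"

definition path_verts :: "bool list \<Rightarrow> (nat \<Rightarrow> 'a) \<Rightarrow> 'a list" where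
  "path_verts L f = map f [0..<Suc (length L)]"

definition is_XY_path :: "'a set \<Rightarrow> 'a set \<Rightarrow> 'a list \<Rightarrow> bool" where
  "is_XY_path X Y ps \<longleftrightarrow> ps \<noteq> [] \<and> hd ps \<in> X \<and> last ps \<in> Y"

definition no_repeats :: "'a set \<Rightarrow> 'a set \<Rightarrow> 'a list \<Rightarrow> bool" where
  "no_repeats A B ps \<longleftrightarrow>
     (let q = filter (\<lambda>x. x \<in> A \<union> B) ps in
      \<forall>j. Suc j < length q \<longrightarrow>
         \<not> (q ! j \<in> A \<and> q ! Suc j \<in> A) \<and> \<not> (q ! j \<in> B \<and> q ! Suc j \<in> B))"

definition useful_path :: "'a set \<Rightarrow> 'a set \<Rightarrow> 'a set \<Rightarrow> 'a set \<Rightarrow> 'a list \<Rightarrow> bool" where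
  "useful_path A B S T ps \<longleftrightarrow>
     (is_XY_path A B ps \<or> is_XY_path B A ps) \<and> no_repeats A B ps \<and>
     odd (length (filter (\<lambda>x. x \<in> S \<union> T) ps))"

end

theory Submission
  imports Defs
begin
lemma greedy:
  fixes ord :: "nat list" and U0 :: "nat set" and f0 :: "nat \<Rightarrow> 'a"
    and Q :: "nat \<Rightarrow> 'a set" and R :: "nat \<Rightarrow> 'a \<Rightarrow> 'a \<Rightarrow> bool" and par :: "nat \<Rightarrow> nat"
  assumes dist: "distinct ord" and disj: "set ord \<inter> U0 = {}" and finU: "finite U0"
    and inj0: "inj_on f0 U0"
    and parent: "\<forall>t<length ord. par (ord!t) \<in> U0 \<union> set (take t ord)"
    and big: "\<forall>t<length ord. \<forall>u. (if par (ord!t) \<in> U0 then u = f0 (par (ord!t)) else u \<in> Q (par (ord!t)))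
                \<longrightarrow> card U0 + length ord < card {w\<in>Q (ord!t). R (ord!t) u w}"
    and avoid: "\<forall>k\<in>set ord. Q k \<inter> f0 ` U0 = {}"
  shows "\<exists>f. (\<forall>k\<in>U0. f k = f0 k) \<and> (\<forall>k\<in>set ord. f k \<in> Q k \<and> R k (f (par k)) (f k)) \<and> inj_on f (U0 \<union> set ord)"
  using dist disj parent big avoid
proof (induction ord rule: rev_induct)
  case Nil
  then show ?case using inj0 by auto
next
  case (snoc k xs)
  have d: "distinct xs" "k \<notin> set xs" using snoc.prems(1) by auto
  have dj: "set xs \<inter> U0 = {}" "k \<notin> U0" using snoc.prems(2) by auto
  have par_xs: "\<forall>t<length xs. par (xs!t) \<in> U0 \<union> set (take t xs)"
  proof (intro allI impI)
    fix t assume t: "t < length xs"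
    have "par ((xs@[k])!t) \<in> U0 \<union> set (take t (xs@[k]))" using snoc.prems(3) t by simp
    thus "par (xs!t) \<in> U0 \<union> set (take t xs)" using t by (simp add: nth_append)
  qed
  have big_xs: "\<forall>t<length xs. \<forall>u. (if par (xs!t) \<in> U0 then u = f0 (par (xs!t)) else u \<in> Q (par (xs!t)))
                \<longrightarrow> card U0 + length xs < card {w\<in>Q (xs!t). R (xs!t) u w}"
  proof (intro allI impI)
    fix t u assume t: "t < length xs" and u: "(if par (xs!t) \<in> U0 then u = f0 (par (xs!t)) else u \<in> Q (par (xs!t)))"
    have tt: "t < length (xs@[k])" using t by simp
    have e: "(xs@[k])!t = xs!t" using t by (simp add: nth_append)
    have "card U0 + length (xs@[k]) < card {w\<in>Q ((xs@[k])!t). R ((xs@[k])!t) u w}"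
      using snoc.prems(4)[rule_format, OF tt, of u] u unfolding e by blast
    thus "card U0 + length xs < card {w\<in>Q (xs!t). R (xs!t) u w}" using t by (simp add: nth_append)
  qed
  have av_xs: "\<forall>k\<in>set xs. Q k \<inter> f0 ` U0 = {}" using snoc.prems(5) by auto
  obtain f where f0eq: "\<forall>k\<in>U0. f k = f0 k" and fq: "\<forall>k\<in>set xs. f k \<in> Q k \<and> R k (f (par k)) (f k)"
    and finj: "inj_on f (U0 \<union> set xs)"
    using snoc.IH[OF d(1) dj(1) par_xs big_xs av_xs] by blast
  have pk: "par k \<in> U0 \<union> set xs"
    using snoc.prems(3) by (auto simp: nth_append dest: spec[of _ "length xs"])
  define u where "u = f (par k)"
  have ucond: "(if par k \<in> U0 then u = f0 (par k) else u \<in> Q (par k))"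
    using pk f0eq fq u_def by auto
  have bigk: "card U0 + length (xs@[k]) < card {w\<in>Q k. R k u w}"
    using snoc.prems(4) ucond by (auto dest: spec[of _ "length xs"])
  have "card (f ` (U0 \<union> set xs)) \<le> card U0 + length xs"
    by (metis List.finite_set card_Un_le card_image_le finU finite_UnI card_length le_trans add_le_mono order_refl)
  hence lt: "card (f ` (U0 \<union> set xs)) < card {w\<in>Q k. R k u w}" using bigk by simp
  have "\<not> {w\<in>Q k. R k u w} \<subseteq> f ` (U0 \<union> set xs)"
  proof
    assume "{w\<in>Q k. R k u w} \<subseteq> f ` (U0 \<union> set xs)"
    hence "card {w\<in>Q k. R k u w} \<le> card (f ` (U0 \<union> set xs))"
      using finU by (intro card_mono) auto
    thus False using lt by simp
  qed
  then obtain w where w: "w \<in> Q k" "R k u w" "w \<notin> f ` (U0 \<union> set xs)" by blast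
  define g where "g = f(k := w)"
  have "\<forall>k'\<in>U0. g k' = f0 k'" using f0eq dj g_def by auto
  moreover have "\<forall>k'\<in>set (xs@[k]). g k' \<in> Q k' \<and> R k' (g (par k')) (g k')"
  proof
    fix k' assume k': "k' \<in> set (xs@[k])"
    show "g k' \<in> Q k' \<and> R k' (g (par k')) (g k')"
    proof (cases "k' = k")
      case True
      have "par k \<noteq> k" using pk d dj by auto
      thus ?thesis using True w g_def u_def by auto
    next
      case False
      hence k'x: "k' \<in> set xs" using k' by auto
      then obtain t where t: "t < length xs" "xs!t = k'" by (auto simp: in_set_conv_nth)
      have "par k' \<in> U0 \<union> set (take t xs)" using par_xs t by auto
      hence "par k' \<in> U0 \<union> set xs" by (meson UnE UnI1 UnI2 in_set_takeD)
      hence "par k' \<noteq> k" using d dj by auto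
      thus ?thesis using False fq k'x g_def by auto
    qed
  qed
  moreover have "inj_on g (U0 \<union> set (xs@[k]))"
  proof -
    have "k \<notin> U0 \<union> set xs" using d dj by auto
    hence "inj_on g (U0 \<union> set xs)" using finj g_def
      by (metis (no_types, lifting) fun_upd_other inj_on_cong)
    moreover have "g k \<notin> g ` (U0 \<union> set xs)" using w g_def \<open>k \<notin> U0 \<union> set xs\<close> by auto
    moreover have "U0 \<union> set xs - {k} = U0 \<union> set xs" using \<open>k \<notin> U0 \<union> set xs\<close> by blast
    ultimately have "inj_on g (insert k (U0 \<union> set xs))" by simp
    thus ?thesis by (simp add: Un_insert_right)
  qed
  ultimately show ?case by blast
qed

definition odn :: "nat \<Rightarrow> nat \<Rightarrow> bool" where
  "odn k k' \<longleftrightarrow> (k,k') \<in> {(0,1),(1,0),(2,1),(2,2),(3,0),(3,3)}"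
definition idn :: "nat \<Rightarrow> nat \<Rightarrow> bool" where
  "idn k k' \<longleftrightarrow> (k,k') \<in> {(0,1),(1,0),(2,0),(2,2),(3,1),(3,3)}"

lemma miss_aux:
  assumes "finite X" "Y \<subseteq> X" "real (card X) - r \<le> real (card {w\<in>X. P w})"
  shows "real (card (Y - {w. P w})) \<le> r"
proof -
  have "card (Y - {w. P w}) \<le> card (X - {w\<in>X. P w})"
    using assms(1,2) by (intro card_mono) auto
  moreover have "card (X - {w\<in>X. P w}) = card X - card {w\<in>X. P w}"
    using assms(1) by (intro card_Diff_subset) auto
  moreover have "card {w\<in>X. P w} \<le> card X" using assms(1) by (intro card_mono) auto
  ultimately show ?thesis using assms(3) by (simp add: of_nat_diff)
qed

locale PG =
  fixes V :: "'a set" and E :: "'a \<Rightarrow> 'a \<Rightarrow> bool" and A B S T :: "'a set"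
    and n :: nat and r e1 h :: real
  assumes dg: "digraph V E" and cV: "card V = n" and deg: "min_semideg_ge V E (real n / 2)"
    and dAB: "A \<inter> B = {}" and dAS: "A \<inter> S = {}" and dAT: "A \<inter> T = {}"
    and dBS: "B \<inter> S = {}" and dBT: "B \<inter> T = {}" and dST: "S \<inter> T = {}"
    and cov: "A \<union> B \<union> S \<union> T = V"
    and szA: "h * n \<le> real (card A)" and szB: "h * n \<le> real (card B)"
    and szS: "h * n \<le> real (card S)" and szT: "h * n \<le> real (card T)"
    and mdA: "\<forall>x\<in>A. h * n \<le> real (outdeg_in E B x) \<and> h * n \<le> real (indeg_in E B x)"
    and mdB: "\<forall>x\<in>B. h * n \<le> real (outdeg_in E A x) \<and> h * n \<le> real (indeg_in E A x)"
    and mdS: "\<forall>x\<in>S. h * n \<le> real (outdeg_in E (B \<union> S) x) \<and> h * n \<le> real (indeg_in E (A \<union> S) x)"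
    and mdT: "\<forall>x\<in>T. h * n \<le> real (outdeg_in E (A \<union> T) x) \<and> h * n \<le> real (indeg_in E (B \<union> T) x)"
    and exA: "real (card {x\<in>A. \<not> (real (outdeg_in E B x) \<ge> real (card B) - r \<and> real (indeg_in E B x) \<ge> real (card B) - r)}) \<le> e1 * n"
    and exB: "real (card {x\<in>B. \<not> (real (outdeg_in E A x) \<ge> real (card A) - r \<and> real (indeg_in E A x) \<ge> real (card A) - r)}) \<le> e1 * n"
    and exS: "real (card {x\<in>S. \<not> (real (outdeg_in E (B \<union> S) x) \<ge> real (card B) + real (card S) - r \<and> real (indeg_in E (A \<union> S) x) \<ge> real (card A) + real (card S) - r)}) \<le> e1 * n"
    and exT: "real (card {x\<in>T. \<not> (real (outdeg_in E (A \<union> T) x) \<ge> real (card A) + real (card T) - r \<and> real (indeg_in E (B \<union> T) x) \<ge> real (card B) + real (card T) - r)}) \<le> e1 * n"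
    and num: "r + 23 < h * n / 2 - e1 * n" and r0: "0 \<le> r" and e0: "0 \<le> e1"
begin

definition cls :: "nat \<Rightarrow> 'a set" where
  "cls k = (if k = 0 then A else if k = 1 then B else if k = 2 then S else T)"

definition good :: "nat \<Rightarrow> 'a \<Rightarrow> bool" where
  "good k x = (if k = 0 then (real (outdeg_in E B x) \<ge> real (card B) - r \<and> real (indeg_in E B x) \<ge> real (card B) - r)
     else if k = 1 then (real (outdeg_in E A x) \<ge> real (card A) - r \<and> real (indeg_in E A x) \<ge> real (card A) - r)
     else if k = 2 then (real (outdeg_in E (B \<union> S) x) \<ge> real (card B) + real (card S) - r \<and> real (indeg_in E (A \<union> S) x) \<ge> real (card A) + real (card S) - r)
     else (real (outdeg_in E (A \<union> T) x) \<ge> real (card A) + real (card T) - r \<and> real (indeg_in E (B \<union> T) x) \<ge> real (card B) + real (card T) - r))"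

definition tp :: "nat \<Rightarrow> 'a set" where "tp k = {x\<in>cls k. good k x}"

lemma finV: "finite V" using dg unfolding digraph_def by auto
lemma finA: "finite A" and finB: "finite B" and finS: "finite S" and finT: "finite T"
  using finV cov by (auto intro: finite_subset)
lemma cls_V: "cls k \<subseteq> V" using cov unfolding cls_def by auto
lemma fin_cls: "finite (cls k)" using finV cls_V by (rule finite_subset[rotated])
lemma tp_cls: "tp k \<subseteq> cls k" unfolding tp_def by auto
lemma E_V: "E x y \<Longrightarrow> x \<in> V \<and> y \<in> V \<and> x \<noteq> y" using dg unfolding digraph_def by auto

lemma tp_comp: "real (card (cls k - tp k)) \<le> e1 * n"
proof -
  have e: "cls k - tp k = {x\<in>cls k. \<not> good k x}" unfolding tp_def by blast
  consider "k = 0" | "k = 1" | "k = 2" | "k \<noteq> 0 \<and> k \<noteq> 1 \<and> k \<noteq> 2" by blast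
  then show ?thesis
  proof cases
    case 1 show ?thesis unfolding e using exA 1 by (simp add: cls_def good_def)
  next
    case 2 show ?thesis unfolding e using exB 2 by (simp add: cls_def good_def)
  next
    case 3 show ?thesis unfolding e using exS 3 by (simp add: cls_def good_def)
  next
    case 4 show ?thesis unfolding e using exT 4 by (simp add: cls_def good_def)
  qed
qed

lemma cls_big: "h * n \<le> real (card (cls k))"
  using szA szB szS szT unfolding cls_def by (simp split: if_split)

lemma tp_big: "h * n - e1 * n \<le> real (card (tp k))"
proof -
  have "card (cls k) \<le> card (tp k) + card (cls k - tp k)"
  proof -
    have eq: "cls k = tp k \<union> (cls k - tp k)" using tp_cls by blast
    have "card (tp k \<union> (cls k - tp k)) \<le> card (tp k) + card (cls k - tp k)" by (rule card_Un_le)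
    thus ?thesis using eq by simp
  qed
  thus ?thesis using tp_comp[of k] cls_big[of k] by linarith
qed

lemma cBS: "card (B \<union> S) = card B + card S" using dBS finB finS by (simp add: card_Un_disjoint)
lemma cAS: "card (A \<union> S) = card A + card S" using dAS finA finS by (simp add: card_Un_disjoint)
lemma cAT: "card (A \<union> T) = card A + card T" using dAT finA finT by (simp add: card_Un_disjoint)
lemma cBT: "card (B \<union> T) = card B + card T" using dBT finB finT by (simp add: card_Un_disjoint)


lemma tp_out:
  assumes v: "v \<in> tp k" and o: "odn k k'"
  shows "real (card (cls k' - {w. E v w})) \<le> r"
proof -
  have g: "good k v" "v \<in> cls k" using v unfolding tp_def by auto
  from o have "(k,k') \<in> {(0,1),(1,0),(2,1),(2,2),(3,0),(3,3)}" unfolding odn_def .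
  then show ?thesis
  proof (elim insertE emptyE)
    assume "(k,k') = (0,1)" thus ?thesis using g finB
      by (intro miss_aux[of B]) (auto simp: cls_def good_def outdeg_in_def)
  next
    assume "(k,k') = (1,0)" thus ?thesis using g finA
      by (intro miss_aux[of A]) (auto simp: cls_def good_def outdeg_in_def)
  next
    assume "(k,k') = (2,1)" thus ?thesis using g finB finS cBS
      by (intro miss_aux[of "B \<union> S"]) (auto simp: cls_def good_def outdeg_in_def)
  next
    assume "(k,k') = (2,2)" thus ?thesis using g finB finS cBS
      by (intro miss_aux[of "B \<union> S"]) (auto simp: cls_def good_def outdeg_in_def)
  next
    assume "(k,k') = (3,0)" thus ?thesis using g finA finT cAT
      by (intro miss_aux[of "A \<union> T"]) (auto simp: cls_def good_def outdeg_in_def)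
  next
    assume "(k,k') = (3,3)" thus ?thesis using g finA finT cAT
      by (intro miss_aux[of "A \<union> T"]) (auto simp: cls_def good_def outdeg_in_def)
  qed
qed


lemma tp_in:
  assumes v: "v \<in> tp k" and o: "idn k k'"
  shows "real (card (cls k' - {w. E w v})) \<le> r"
proof -
  have g: "good k v" "v \<in> cls k" using v unfolding tp_def by auto
  from o have "(k,k') \<in> {(0,1),(1,0),(2,0),(2,2),(3,1),(3,3)}" unfolding idn_def .
  then show ?thesis
  proof (elim insertE emptyE)
    assume "(k,k') = (0,1)" thus ?thesis using g finB
      by (intro miss_aux[of B]) (auto simp: cls_def good_def indeg_in_def)
  next
    assume "(k,k') = (1,0)" thus ?thesis using g finA
      by (intro miss_aux[of A]) (auto simp: cls_def good_def indeg_in_def)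
  next
    assume "(k,k') = (2,0)" thus ?thesis using g finA finS cAS
      by (intro miss_aux[of "A \<union> S"]) (auto simp: cls_def good_def indeg_in_def)
  next
    assume "(k,k') = (2,2)" thus ?thesis using g finA finS cAS
      by (intro miss_aux[of "A \<union> S"]) (auto simp: cls_def good_def indeg_in_def)
  next
    assume "(k,k') = (3,1)" thus ?thesis using g finB finT cBT
      by (intro miss_aux[of "B \<union> T"]) (auto simp: cls_def good_def indeg_in_def)
  next
    assume "(k,k') = (3,3)" thus ?thesis using g finB finT cBT
      by (intro miss_aux[of "B \<union> T"]) (auto simp: cls_def good_def indeg_in_def)
  qed
qed

end

lemma card_diff_real: "finite Z \<Longrightarrow> real (card X) - real (card Z) \<le> real (card (X - Z))"
  using diff_card_le_card_Diff[of Z X] by linarith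
context PG begin
lemma cnt_typ:
  assumes u: "u \<in> tp kp" and d: "if d then odn kp k else idn kp k" and fF: "finite F"
  shows "h * n - e1 * n - real (card F) - r \<le> real (card {w\<in>tp k - F. (if d then E u w else E w u)})"
proof -
  define M where "M = cls k - {w. (if d then E u w else E w u)}"
  have cM: "real (card M) \<le> r"
  proof (cases d)
    case True
    hence "odn kp k" using d by simp
    thus ?thesis using tp_out[OF u] True unfolding M_def by simp
  next
    case False
    hence "idn kp k" using d by simp
    thus ?thesis using tp_in[OF u] False unfolding M_def by simp
  qed
  define Z where "Z = (cls k - tp k) \<union> F \<union> M"
  have fZ: "finite Z" unfolding Z_def using fF fin_cls[of k] by (simp add: M_def)
  have "card Z \<le> card ((cls k - tp k) \<union> F) + card M"
    unfolding Z_def by (rule card_Un_le)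
  moreover have "card ((cls k - tp k) \<union> F) \<le> card (cls k - tp k) + card F" by (rule card_Un_le)
  ultimately have "card Z \<le> card (cls k - tp k) + card F + card M" by linarith
  hence cZ: "real (card Z) \<le> e1 * n + card F + r" using tp_comp[of k] cM by linarith
  have sub: "cls k - Z \<subseteq> {w\<in>tp k - F. (if d then E u w else E w u)}"
  proof
    fix w assume "w \<in> cls k - Z"
    hence "w \<in> tp k" "w \<notin> F" "w \<in> cls k" "w \<notin> M" unfolding Z_def by auto
    thus "w \<in> {w\<in>tp k - F. (if d then E u w else E w u)}" unfolding M_def by auto
  qed
  have "card (cls k - Z) \<le> card {w\<in>tp k - F. (if d then E u w else E w u)}"
  proof (rule card_mono)
    show "finite {w\<in>tp k - F. (if d then E u w else E w u)}"
      by (rule finite_subset[OF _ fin_cls[of k]]) (use tp_cls in blast)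
  qed (rule sub)
  hence "real (card (cls k - Z)) \<le> real (card {w\<in>tp k - F. (if d then E u w else E w u)})" by simp
  moreover have "real (card (cls k)) - real (card Z) \<le> real (card (cls k - Z))"
    using card_diff_real[OF fZ] .
  ultimately show ?thesis using cZ cls_big[of k] by linarith
qed

lemma cnt_y:
  assumes y: "h * n / 2 \<le> real (card {w\<in>cls cw. E w y})" and fF: "finite F"
  shows "h * n / 2 - e1 * n - real (card F) \<le> real (card {w\<in>tp cw - F. E w y})"
proof -
  define Z where "Z = (cls cw - tp cw) \<union> F"
  have fZ: "finite Z" unfolding Z_def using fF fin_cls[of cw] by simp
  have "card Z \<le> card (cls cw - tp cw) + card F"
    unfolding Z_def by (rule card_Un_le)
  hence cZ: "real (card Z) \<le> e1 * n + card F" using tp_comp[of cw] by linarith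
  have sub: "{w\<in>cls cw. E w y} - Z \<subseteq> {w\<in>tp cw - F. E w y}"
  proof
    fix w assume "w \<in> {w\<in>cls cw. E w y} - Z"
    thus "w \<in> {w\<in>tp cw - F. E w y}" unfolding Z_def by auto
  qed
  have "card ({w\<in>cls cw. E w y} - Z) \<le> card {w\<in>tp cw - F. E w y}"
  proof (rule card_mono)
    show "finite {w\<in>tp cw - F. E w y}"
      by (rule finite_subset[OF _ fin_cls[of cw]]) (use tp_cls in blast)
  qed (rule sub)
  moreover have "real (card {w\<in>cls cw. E w y}) - real (card Z) \<le> real (card ({w\<in>cls cw. E w y} - Z))"
    using card_diff_real[OF fZ] .
  ultimately show ?thesis using cZ y by linarith
qed

end

definition ioL :: "bool list \<Rightarrow> nat \<Rightarrow> nat \<Rightarrow> bool" where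
  "ioL L \<rho>' k = (if \<rho>' < k then L!(k-1) else \<not> L!k)"
definition parf :: "nat \<Rightarrow> nat \<Rightarrow> nat" where
  "parf \<rho>' k = (if \<rho>' < k then k - 1 else Suc k)"
definition pchk :: "bool list \<Rightarrow> nat list \<Rightarrow> nat \<Rightarrow> nat \<Rightarrow> nat option \<Rightarrow> nat \<Rightarrow> bool" where
  "pchk L c \<rho> \<rho>' iyo cw = (\<forall>k<9. (\<rho>' < k \<or> k < \<rho>) \<longrightarrow>
     (if iyo = Some (parf \<rho>' k) then \<not> ioL L \<rho>' k \<and> c!k = cw
      else (if ioL L \<rho>' k then odn (c!parf \<rho>' k) (c!k) else idn (c!parf \<rho>' k) (c!k))))"

lemma take_mem: "i < t \<Longrightarrow> t \<le> length xs \<Longrightarrow> xs!i \<in> set (take t xs)"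
  unfolding in_set_conv_nth by (rule exI[of _ i]) simp

context PG begin

lemma master:
  assumes L8: "length L = 8" and c9: "length c = 9"
    and r1: "\<rho> \<le> \<rho>'" and r2: "\<rho>' \<le> Suc \<rho>" and r3: "\<rho>' \<le> 8"
    and inj0: "inj_on f0 {\<rho>..\<rho>'}" and f0F: "\<forall>j\<in>{\<rho>..\<rho>'}. f0 j \<in> F \<and> f0 j \<in> cls (c!j)"
    and f0t: "\<forall>j\<in>{\<rho>..\<rho>'}. iyo \<noteq> Some j \<longrightarrow> f0 j \<in> tp (c!j)"
    and yc: "\<forall>j. iyo = Some j \<longrightarrow> j \<in> {\<rho>..\<rho>'} \<and> h * n / 2 \<le> real (card {w\<in>cls cw. E w (f0 j)})"
    and re: "\<rho> < \<rho>' \<longrightarrow> (if L!\<rho> then E (f0 \<rho>) (f0 \<rho>') else E (f0 \<rho>') (f0 \<rho>))"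
    and pc: "pchk L c \<rho> \<rho>' iyo cw" and fF: "finite F" and cF: "card F \<le> 14"
  shows "\<exists>f. is_copy V E L f \<and> (\<forall>j\<le>8. f j \<in> cls (c!j)) \<and> (\<forall>j\<le>8. (j < \<rho> \<or> \<rho>' < j) \<longrightarrow> f j \<notin> F)
           \<and> (\<forall>j\<in>{\<rho>..\<rho>'}. f j = f0 j)"
proof -
  define ord where "ord = [Suc \<rho>'..<9] @ rev [0..<\<rho>]"
  define U0 where "U0 = {\<rho>..\<rho>'}"
  define Q where "Q k = tp (c!k) - F" for k
  define R where "R k u w = (if ioL L \<rho>' k then E u w else E w u)" for k u w
  have so: "set ord = {Suc \<rho>'..<9} \<union> {0..<\<rho>}" unfolding ord_def by auto
  have dist: "distinct ord" unfolding ord_def using r1 by auto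
  have disj: "set ord \<inter> U0 = {}" unfolding so U0_def by auto
  have lo: "length ord = (8 - \<rho>') + \<rho>" unfolding ord_def using r3 by simp
  have cU: "card U0 = Suc \<rho>' - \<rho>" unfolding U0_def by simp
  have tot: "card U0 + length ord = 9" using cU lo r1 r3 by simp
  have parent: "\<forall>t<length ord. parf \<rho>' (ord!t) \<in> U0 \<union> set (take t ord)"
  proof (intro allI impI)
    fix t assume t: "t < length ord"
    show "parf \<rho>' (ord!t) \<in> U0 \<union> set (take t ord)"
    proof (cases "t < 8 - \<rho>'")
      case True
      have ot: "ord!t = Suc \<rho>' + t" unfolding ord_def using True by (simp add: nth_append)
      show ?thesis
      proof (cases t)
        case 0 thus ?thesis using ot r1 unfolding parf_def U0_def by simp
      next
        case (Suc t1)
        have "ord!t1 = Suc \<rho>' + t1" unfolding ord_def using True Suc by (simp add: nth_append)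
        moreover have "ord!t1 \<in> set (take t ord)" using t Suc by (intro take_mem) auto
        ultimately show ?thesis using ot Suc unfolding parf_def by simp
      qed
    next
      case False
      define t' where "t' = t - (8 - \<rho>')"
      have t'r: "t' < \<rho>" using t False lo unfolding t'_def by simp
      have ot: "ord!t = \<rho> - Suc t'" unfolding ord_def using False t'r r3 by (simp add: nth_append rev_nth t'_def)
      show ?thesis
      proof (cases t')
        case 0 thus ?thesis using ot t'r r1 unfolding parf_def U0_def by auto
      next
        case (Suc t1)
        have tt: "t - 1 = (8 - \<rho>') + t1" using Suc False unfolding t'_def by simp
        have lx: "length [Suc \<rho>'..<9] = 8 - \<rho>'" by simp
        have "ord!(t-1) = rev [0..<\<rho>] ! t1" unfolding ord_def tt
          using nth_append_length_plus[of "[Suc \<rho>'..<9]" "rev [0..<\<rho>]" t1] unfolding lx .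
        also have "\<dots> = \<rho> - Suc t1" using t'r Suc by (simp add: rev_nth)
        finally have "ord!(t-1) = \<rho> - Suc t1" .
        moreover have "ord!(t-1) \<in> set (take t ord)" using t Suc False unfolding t'_def by (intro take_mem) auto
        moreover have "parf \<rho>' (ord!t) = \<rho> - Suc t1" using ot Suc t'r r1 unfolding parf_def by auto
        ultimately show ?thesis by simp
      qed
    qed
  qed
  have big: "\<forall>t<length ord. \<forall>u. (if parf \<rho>' (ord!t) \<in> U0 then u = f0 (parf \<rho>' (ord!t)) else u \<in> Q (parf \<rho>' (ord!t)))
                \<longrightarrow> card U0 + length ord < card {w\<in>Q (ord!t). R (ord!t) u w}"
  proof (intro allI impI)
    fix t u assume t: "t < length ord" and uc0: "(if parf \<rho>' (ord!t) \<in> U0 then u = f0 (parf \<rho>' (ord!t)) else u \<in> Q (parf \<rho>' (ord!t)))"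
    define k where "k = ord!t"
    have kin: "k \<in> set ord" using t k_def by simp
    hence kr: "k < 9" "\<rho>' < k \<or> k < \<rho>" using so r1 r3 by auto
    define p where "p = parf \<rho>' k"
    have uc: "(if p \<in> U0 then u = f0 p else u \<in> Q p)" using uc0 unfolding p_def k_def .
    have pck: "if iyo = Some p then \<not> ioL L \<rho>' k \<and> c!k = cw else (if ioL L \<rho>' k then odn (c!p) (c!k) else idn (c!p) (c!k))"
      using pc kr unfolding pchk_def p_def by blast
    have "9 < card {w\<in>Q k. R k u w}"
    proof (cases "iyo = Some p")
      case True
      have pU: "p \<in> U0" "h*n/2 \<le> real (card {w\<in>cls cw. E w (f0 p)})" using yc True unfolding U0_def by auto
      hence uu: "u = f0 p" using uc by simp
      have "\<not> ioL L \<rho>' k" "c!k = cw" using pck True by auto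
      hence eq: "{w\<in>Q k. R k u w} = {w\<in>tp cw - F. E w (f0 p)}" unfolding Q_def R_def uu by simp
      have "h*n/2 - e1*n - real (card F) \<le> real (card {w\<in>tp cw - F. E w (f0 p)})" by (rule cnt_y[OF pU(2) fF])
      hence "real 9 < real (card {w\<in>Q k. R k u w})" using eq cF num r0 by simp
      thus ?thesis by linarith
    next
      case False
      have ut: "u \<in> tp (c!p)"
      proof (cases "p \<in> U0")
        case True thus ?thesis using uc f0t False unfolding U0_def by auto
      next
        case False thus ?thesis using uc unfolding Q_def by auto
      qed
      have dd: "if ioL L \<rho>' k then odn (c!p) (c!k) else idn (c!p) (c!k)" using pck False by simp
      have eqs: "{w\<in>tp (c!k) - F. (if ioL L \<rho>' k then E u w else E w u)} = {w\<in>Q k. R k u w}"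
        unfolding Q_def R_def by simp
      have "h * n - e1 * n - real (card F) - r \<le> real (card {w\<in>tp (c!k) - F. (if ioL L \<rho>' k then E u w else E w u)})"
        by (rule cnt_typ[OF ut dd fF])
      hence "h * n - e1 * n - real (card F) - r \<le> real (card {w\<in>Q k. R k u w})" unfolding eqs .
      moreover have "real (card F) \<le> 14" using cF by simp
      moreover have "0 \<le> e1 * real n" using e0 by simp
      ultimately have "real 9 < real (card {w\<in>Q k. R k u w})" using num r0 by linarith
      thus ?thesis by linarith
    qed
    thus "card U0 + length ord < card {w\<in>Q (ord!t). R (ord!t) u w}" using tot k_def by simp
  qed
  have avoid: "\<forall>k\<in>set ord. Q k \<inter> f0 ` U0 = {}" using f0F unfolding Q_def U0_def by auto
  have finU: "finite U0" by (simp add: U0_def)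
  obtain f where fU: "\<forall>k\<in>U0. f k = f0 k" and fo: "\<forall>k\<in>set ord. f k \<in> Q k \<and> R k (f (parf \<rho>' k)) (f k)"
    and finj: "inj_on f (U0 \<union> set ord)"
    using greedy[OF dist disj finU inj0[folded U0_def] parent big avoid] by blast
  have all: "U0 \<union> set ord = {0..8}" unfolding so U0_def using r1 r2 r3 by auto
  have fc: "\<forall>j\<le>8. f j \<in> cls (c!j)"
  proof (intro allI impI)
    fix j :: nat assume "j \<le> 8"
    hence "j \<in> U0 \<or> j \<in> set ord" using all by auto
    thus "f j \<in> cls (c!j)"
    proof
      assume "j \<in> U0" thus ?thesis using fU f0F unfolding U0_def by auto
    next
      assume "j \<in> set ord" thus ?thesis using fo tp_cls unfolding Q_def by blast
    qed
  qed
  have fnF: "\<forall>j\<le>8. (j < \<rho> \<or> \<rho>' < j) \<longrightarrow> f j \<notin> F"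
  proof (intro allI impI)
    fix j :: nat assume "j \<le> 8" "j < \<rho> \<or> \<rho>' < j"
    hence "j \<in> set ord" using so by auto
    thus "f j \<notin> F" using fo unfolding Q_def by blast
  qed
  have edges: "\<forall>i<length L. if L ! i then E (f i) (f (Suc i)) else E (f (Suc i)) (f i)"
  proof (intro allI impI)
    fix i assume i: "i < length L"
    show "if L ! i then E (f i) (f (Suc i)) else E (f (Suc i)) (f i)"
    proof (cases "\<rho>' \<le> i")
      case True
      have "Suc i \<in> set ord" using so True i L8 by auto
      hence "R (Suc i) (f (parf \<rho>' (Suc i))) (f (Suc i))" using fo by blast
      moreover have pe: "parf \<rho>' (Suc i) = i" and ie: "ioL L \<rho>' (Suc i) = L!i" using True unfolding parf_def ioL_def by auto
      ultimately have "R (Suc i) (f i) (f (Suc i))" by simp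
      thus ?thesis unfolding R_def ie .
    next
      case False
      show ?thesis
      proof (cases "i < \<rho>")
        case True
        have "i \<in> set ord" using so True by auto
        hence "R i (f (parf \<rho>' i)) (f i)" using fo by blast
        moreover have pe: "parf \<rho>' i = Suc i" and ie: "ioL L \<rho>' i = (\<not> L!i)" using True r1 unfolding parf_def ioL_def by auto
        ultimately have "R i (f (Suc i)) (f i)" by simp
        thus ?thesis unfolding R_def ie by (cases "L!i") auto
      next
        case False2: False
        have "i = \<rho>" "\<rho>' = Suc i" using False False2 r2 by auto
        moreover have "f \<rho> = f0 \<rho>" "f \<rho>' = f0 \<rho>'" using fU r1 unfolding U0_def by auto
        ultimately show ?thesis using re by auto
      qed
    qed
  qed
  have "is_copy V E L f"
    unfolding is_copy_def
  proof (intro conjI)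
    show "inj_on f {0..length L}" using finj all L8 by simp
    show "f ` {0..length L} \<subseteq> V" using fc cls_V L8 by fastforce
    show "\<forall>i<length L. if L ! i then E (f i) (f (Suc i)) else E (f (Suc i)) (f i)" by (rule edges)
  qed
  moreover have "\<forall>j\<in>{\<rho>..\<rho>'}. f j = f0 j" using fU unfolding U0_def .
  ultimately show ?thesis using fc fnF by blast
qed

end

fun altq :: "nat list \<Rightarrow> bool" where
  "altq (a # b # xs) = (a \<noteq> b \<and> altq (b # xs))"
| "altq _ = True"

lemma altq_nth: "altq xs \<Longrightarrow> Suc j < length xs \<Longrightarrow> xs!j \<noteq> xs!Suc j"
proof (induction xs arbitrary: j rule: altq.induct)
  case (1 a b xs)
  show ?case
  proof (cases j)
    case 0 thus ?thesis using 1 by simp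
  next
    case (Suc j') thus ?thesis using 1 by simp
  qed
qed auto

definition ucode :: "nat list \<Rightarrow> nat \<Rightarrow> bool" where
  "ucode c X = (X < 2 \<and> c!0 = X \<and> c!8 = 1 - X \<and> altq (filter (\<lambda>k. k < 2) c) \<and> odd (length (filter (\<lambda>k. 2 \<le> k) c)))"

lemma all9: "(\<forall>k<(9::nat). P k) = (P 0 \<and> P 1 \<and> P 2 \<and> P 3 \<and> P 4 \<and> P 5 \<and> P 6 \<and> P 7 \<and> P 8)"
  by (simp add: eval_nat_numeral All_less_Suc2)

definition nc :: "nat \<Rightarrow> bool \<Rightarrow> nat \<Rightarrow> nat list" where
  "nc i b X = map (\<lambda>j. if j < i then (if even j then X else 1-X) else if j = i then
     (if ((if even (i-1) then X else 1-X) = 0) = b then 2 else 3) else (if odd j then X else 1-X)) [0..<9]"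

lemma nc_ok:
  assumes X: "X < 2" and i1: "1 \<le> i" and i7: "i \<le> 7" and b1: "L!(i-1) = b" and b2: "L!i = b"
  shows "length (nc i b X) = 9 \<and> (\<forall>j<9. nc i b X ! j < 4) \<and> ucode (nc i b X) X \<and> pchk L (nc i b X) i i None 0"
proof -
  have Xc: "X = 0 \<or> X = 1" using X by auto
  have ic: "i = 1 \<or> i = 2 \<or> i = 3 \<or> i = 4 \<or> i = 5 \<or> i = 6 \<or> i = 7" using i1 i7 by auto
  show ?thesis using Xc ic b1 b2
    by (elim disjE; cases b; simp add: nc_def ucode_def pchk_def all9 ioL_def parf_def odn_def idn_def upt_rec)
qed

definition alt :: "bool \<Rightarrow> bool list" where
  "alt ob = [ob, \<not>ob, ob, \<not>ob, ob, \<not>ob, ob, \<not>ob]"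

definition cfgs :: "(nat \<times> nat \<times> nat) set" where
  "cfgs = {(2,0,1),(3,1,0),(2,3,1),(2,3,3),(3,2,0),(3,2,2)}"

definition PP :: "bool list \<Rightarrow> nat \<Rightarrow> nat \<times> nat \<times> nat \<Rightarrow> nat list \<Rightarrow> nat \<Rightarrow> nat \<Rightarrow> bool" where
  "PP L X cf c ix iy = (length c = 9 \<and> (\<forall>j<9. c!j < 4) \<and> ucode c X \<and> c!ix = fst cf \<and> c!iy = fst (snd cf)
    \<and> (ix = Suc iy \<or> iy = Suc ix) \<and> ix \<le> 8 \<and> iy \<le> 8 \<and> L ! (min ix iy) = (ix < iy)
    \<and> pchk L c (min ix iy) (max ix iy) (Some iy) (snd (snd cf)))"

lemma pt_T_0_201: "\<exists>c ix iy. PP (alt True) 0 (2,0,1) c ix iy"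
  by (rule exI[of _ "[0,1,0,1,0,1,2,0,1]"], rule exI[of _ 6], rule exI[of _ 7])
     (simp add: PP_def ucode_def pchk_def all9 ioL_def parf_def odn_def idn_def alt_def)

lemma pt_T_0_310: "\<exists>c ix iy. PP (alt True) 0 (3,1,0) c ix iy"
  by (rule exI[of _ "[0,1,0,1,0,1,3,0,1]"], rule exI[of _ 6], rule exI[of _ 5])
     (simp add: PP_def ucode_def pchk_def all9 ioL_def parf_def odn_def idn_def alt_def)

lemma pt_T_0_231: "\<exists>c ix iy. PP (alt True) 0 (2,3,1) c ix iy"
  by (rule exI[of _ "[0,1,0,1,0,2,2,3,1]"], rule exI[of _ 6], rule exI[of _ 7])
     (simp add: PP_def ucode_def pchk_def all9 ioL_def parf_def odn_def idn_def alt_def)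

lemma pt_T_0_233: "\<exists>c ix iy. PP (alt True) 0 (2,3,3) c ix iy"
  by (rule exI[of _ "[0,1,0,1,2,3,3,0,1]"], rule exI[of _ 4], rule exI[of _ 5])
     (simp add: PP_def ucode_def pchk_def all9 ioL_def parf_def odn_def idn_def alt_def)

lemma pt_T_0_320: "\<exists>c ix iy. PP (alt True) 0 (3,2,0) c ix iy"
  by (rule exI[of _ "[0,1,0,1,0,2,3,3,1]"], rule exI[of _ 6], rule exI[of _ 5])
     (simp add: PP_def ucode_def pchk_def all9 ioL_def parf_def odn_def idn_def alt_def)

lemma pt_T_0_322: "\<exists>c ix iy. PP (alt True) 0 (3,2,2) c ix iy"
  by (rule exI[of _ "[0,1,0,1,2,2,3,0,1]"], rule exI[of _ 6], rule exI[of _ 5])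
     (simp add: PP_def ucode_def pchk_def all9 ioL_def parf_def odn_def idn_def alt_def)

lemma pt_T_1_201: "\<exists>c ix iy. PP (alt True) 1 (2,0,1) c ix iy"
  by (rule exI[of _ "[1,0,1,0,1,0,2,1,0]"], rule exI[of _ 6], rule exI[of _ 5])
     (simp add: PP_def ucode_def pchk_def all9 ioL_def parf_def odn_def idn_def alt_def)

lemma pt_T_1_310: "\<exists>c ix iy. PP (alt True) 1 (3,1,0) c ix iy"
  by (rule exI[of _ "[1,0,1,0,1,0,3,1,0]"], rule exI[of _ 6], rule exI[of _ 7])
     (simp add: PP_def ucode_def pchk_def all9 ioL_def parf_def odn_def idn_def alt_def)

lemma pt_T_1_231: "\<exists>c ix iy. PP (alt True) 1 (2,3,1) c ix iy"
  by (rule exI[of _ "[1,0,1,0,1,3,2,2,0]"], rule exI[of _ 6], rule exI[of _ 5])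
     (simp add: PP_def ucode_def pchk_def all9 ioL_def parf_def odn_def idn_def alt_def)

lemma pt_T_1_233: "\<exists>c ix iy. PP (alt True) 1 (2,3,3) c ix iy"
  by (rule exI[of _ "[1,0,1,0,3,3,2,1,0]"], rule exI[of _ 6], rule exI[of _ 5])
     (simp add: PP_def ucode_def pchk_def all9 ioL_def parf_def odn_def idn_def alt_def)

lemma pt_T_1_320: "\<exists>c ix iy. PP (alt True) 1 (3,2,0) c ix iy"
  by (rule exI[of _ "[1,0,1,0,1,3,3,2,0]"], rule exI[of _ 6], rule exI[of _ 7])
     (simp add: PP_def ucode_def pchk_def all9 ioL_def parf_def odn_def idn_def alt_def)

lemma pt_T_1_322: "\<exists>c ix iy. PP (alt True) 1 (3,2,2) c ix iy"
  by (rule exI[of _ "[1,0,1,0,3,2,2,1,0]"], rule exI[of _ 4], rule exI[of _ 5])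
     (simp add: PP_def ucode_def pchk_def all9 ioL_def parf_def odn_def idn_def alt_def)

lemma pt_F_0_201: "\<exists>c ix iy. PP (alt False) 0 (2,0,1) c ix iy"
  by (rule exI[of _ "[0,1,0,1,0,1,0,2,1]"], rule exI[of _ 7], rule exI[of _ 6])
     (simp add: PP_def ucode_def pchk_def all9 ioL_def parf_def odn_def idn_def alt_def)

lemma pt_F_0_310: "\<exists>c ix iy. PP (alt False) 0 (3,1,0) c ix iy"
  by (rule exI[of _ "[0,1,0,1,0,1,0,3,1]"], rule exI[of _ 7], rule exI[of _ 8])
     (simp add: PP_def ucode_def pchk_def all9 ioL_def parf_def odn_def idn_def alt_def)

lemma pt_F_0_231: "\<exists>c ix iy. PP (alt False) 0 (2,3,1) c ix iy"
  by (rule exI[of _ "[0,1,0,1,3,2,2,0,1]"], rule exI[of _ 5], rule exI[of _ 4])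
     (simp add: PP_def ucode_def pchk_def all9 ioL_def parf_def odn_def idn_def alt_def)

lemma pt_F_0_233: "\<exists>c ix iy. PP (alt False) 0 (2,3,3) c ix iy"
  by (rule exI[of _ "[0,1,0,1,0,3,3,2,1]"], rule exI[of _ 7], rule exI[of _ 6])
     (simp add: PP_def ucode_def pchk_def all9 ioL_def parf_def odn_def idn_def alt_def)

lemma pt_F_0_320: "\<exists>c ix iy. PP (alt False) 0 (3,2,0) c ix iy"
  by (rule exI[of _ "[0,1,0,1,3,3,2,0,1]"], rule exI[of _ 5], rule exI[of _ 6])
     (simp add: PP_def ucode_def pchk_def all9 ioL_def parf_def odn_def idn_def alt_def)

lemma pt_F_0_322: "\<exists>c ix iy. PP (alt False) 0 (3,2,2) c ix iy"
  by (rule exI[of _ "[0,1,0,1,0,3,2,2,1]"], rule exI[of _ 5], rule exI[of _ 6])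
     (simp add: PP_def ucode_def pchk_def all9 ioL_def parf_def odn_def idn_def alt_def)

lemma pt_F_1_201: "\<exists>c ix iy. PP (alt False) 1 (2,0,1) c ix iy"
  by (rule exI[of _ "[1,0,1,0,1,0,1,2,0]"], rule exI[of _ 7], rule exI[of _ 8])
     (simp add: PP_def ucode_def pchk_def all9 ioL_def parf_def odn_def idn_def alt_def)

lemma pt_F_1_310: "\<exists>c ix iy. PP (alt False) 1 (3,1,0) c ix iy"
  by (rule exI[of _ "[1,0,1,0,1,0,1,3,0]"], rule exI[of _ 7], rule exI[of _ 6])
     (simp add: PP_def ucode_def pchk_def all9 ioL_def parf_def odn_def idn_def alt_def)

lemma pt_F_1_231: "\<exists>c ix iy. PP (alt False) 1 (2,3,1) c ix iy"
  by (rule exI[of _ "[1,0,1,0,2,2,3,1,0]"], rule exI[of _ 5], rule exI[of _ 6])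
     (simp add: PP_def ucode_def pchk_def all9 ioL_def parf_def odn_def idn_def alt_def)

lemma pt_F_1_233: "\<exists>c ix iy. PP (alt False) 1 (2,3,3) c ix iy"
  by (rule exI[of _ "[1,0,1,0,1,2,3,3,0]"], rule exI[of _ 5], rule exI[of _ 6])
     (simp add: PP_def ucode_def pchk_def all9 ioL_def parf_def odn_def idn_def alt_def)

lemma pt_F_1_320: "\<exists>c ix iy. PP (alt False) 1 (3,2,0) c ix iy"
  by (rule exI[of _ "[1,0,1,0,2,3,3,1,0]"], rule exI[of _ 5], rule exI[of _ 4])
     (simp add: PP_def ucode_def pchk_def all9 ioL_def parf_def odn_def idn_def alt_def)

lemma pt_F_1_322: "\<exists>c ix iy. PP (alt False) 1 (3,2,2) c ix iy"
  by (rule exI[of _ "[1,0,1,0,1,2,2,3,0]"], rule exI[of _ 7], rule exI[of _ 6])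
     (simp add: PP_def ucode_def pchk_def all9 ioL_def parf_def odn_def idn_def alt_def)

lemma pat_ex:
  assumes X: "X < 2" and cf: "cf \<in> cfgs"
  shows "\<exists>c ix iy. PP (alt ob) X cf c ix iy"
proof -
  have cfc: "cf = (2,0,1) \<or> cf = (3,1,0) \<or> cf = (2,3,1) \<or> cf = (2,3,3) \<or> cf = (3,2,0) \<or> cf = (3,2,2)"
    using cf unfolding cfgs_def by auto
  have Xc: "X = 0 \<or> X = 1" using X by auto
  show ?thesis
  proof (cases ob)
    case True
    show ?thesis using Xc cfc True pt_T_0_201 pt_T_0_310 pt_T_0_231 pt_T_0_233 pt_T_0_320 pt_T_0_322 pt_T_1_201 pt_T_1_310 pt_T_1_231 pt_T_1_233 pt_T_1_320 pt_T_1_322 by auto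
  next
    case False
    show ?thesis using Xc cfc False pt_F_0_201 pt_F_0_310 pt_F_0_231 pt_F_0_233 pt_F_0_320 pt_F_0_322 pt_F_1_201 pt_F_1_310 pt_F_1_231 pt_F_1_233 pt_F_1_320 pt_F_1_322 by auto
  qed
qed

context PG begin

lemma cls_mem: "x \<in> cls k \<Longrightarrow> k < 4 \<Longrightarrow> (x \<in> A \<longleftrightarrow> k = 0) \<and> (x \<in> B \<longleftrightarrow> k = 1) \<and> (x \<in> S \<union> T \<longleftrightarrow> 2 \<le> k)"
  using dAB dAS dAT dBS dBT dST unfolding cls_def
  by (cases "k = 0"; cases "k = 1"; cases "k = 2"; auto)

lemma useful_codes:
  assumes c9: "length c = 9" and c4: "\<forall>j<9. c!j < 4" and fc: "\<forall>j\<le>8. f j \<in> cls (c!j)"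
    and L8: "length L = 8" and uc: "ucode c X"
  shows "useful_path A B S T (path_verts L f) \<and> is_XY_path (cls X) (cls (1-X)) (path_verts L f)"
proof -
  have pv: "path_verts L f = map f [0..<9]" unfolding path_verts_def L8 by simp
  have mem: "\<And>j. j \<in> set [0..<9] \<Longrightarrow> (f j \<in> A \<longleftrightarrow> c!j = 0) \<and> (f j \<in> B \<longleftrightarrow> c!j = 1) \<and> (f j \<in> S \<union> T \<longleftrightarrow> 2 \<le> c!j)"
    using fc c4 cls_mem by simp
  have cm: "c = map (\<lambda>j. c!j) [0..<9]" using c9 by (metis map_nth)
  define js where "js = filter (\<lambda>j. c!j < 2) [0..<9]"
  have q: "filter (\<lambda>x. x \<in> A \<union> B) (map f [0..<9]) = map f js"
  proof -
    have "filter (\<lambda>x. x \<in> A \<union> B) (map f [0..<9]) = map f (filter (\<lambda>j. f j \<in> A \<union> B) [0..<9])"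
      by (simp add: filter_map o_def)
    also have "filter (\<lambda>j. f j \<in> A \<union> B) [0..<9] = js" unfolding js_def
      using mem by (intro filter_cong) auto
    finally show ?thesis .
  qed
  have cq: "filter (\<lambda>k. k < 2) c = map (\<lambda>j. c!j) js"
  proof -
    have "filter (\<lambda>k. k < 2) c = filter (\<lambda>k. k < 2) (map (\<lambda>j. c!j) [0..<9])" using cm by simp
    also have "\<dots> = map (\<lambda>j. c!j) js" unfolding js_def by (simp add: filter_map o_def)
    finally show ?thesis .
  qed
  have jsin: "\<And>j. j < length js \<Longrightarrow> js!j \<in> set [0..<9] \<and> c!(js!j) < 2"
  proof -
    fix j assume "j < length js"
    hence "js!j \<in> set js" by simp
    thus "js!j \<in> set [0..<9] \<and> c!(js!j) < 2" unfolding js_def by simp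
  qed
  have alt: "altq (map (\<lambda>j. c!j) js)" using uc cq unfolding ucode_def by simp
  have nr: "no_repeats A B (path_verts L f)"
    unfolding no_repeats_def Let_def pv q
  proof (intro allI impI)
    fix j assume j: "Suc j < length (map f js)"
    hence j1: "Suc j < length js" "j < length js" by auto
    have ne: "c!(js!j) \<noteq> c!(js!Suc j)" using altq_nth[OF alt, of j] j1 by simp
    have m1: "(f (js!j) \<in> A \<longleftrightarrow> c!(js!j) = 0) \<and> (f (js!j) \<in> B \<longleftrightarrow> c!(js!j) = 1)" using mem jsin j1 by blast
    have m2: "(f (js!Suc j) \<in> A \<longleftrightarrow> c!(js!Suc j) = 0) \<and> (f (js!Suc j) \<in> B \<longleftrightarrow> c!(js!Suc j) = 1)" using mem jsin j1 by blast
    show "\<not> (map f js ! j \<in> A \<and> map f js ! Suc j \<in> A) \<and> \<not> (map f js ! j \<in> B \<and> map f js ! Suc j \<in> B)"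
      using ne m1 m2 j1 by auto
  qed
  have cnt: "length (filter (\<lambda>x. x \<in> S \<union> T) (path_verts L f)) = length (filter (\<lambda>k. 2 \<le> k) c)"
  proof -
    have "filter (\<lambda>x. x \<in> S \<union> T) (map f [0..<9]) = map f (filter (\<lambda>j. f j \<in> S \<union> T) [0..<9])"
      by (simp add: filter_map o_def)
    also have "filter (\<lambda>j. f j \<in> S \<union> T) [0..<9] = filter (\<lambda>j. 2 \<le> c!j) [0..<9]"
      using mem by (intro filter_cong) auto
    finally have "length (filter (\<lambda>x. x \<in> S \<union> T) (map f [0..<9])) = length (filter (\<lambda>j. 2 \<le> c!j) [0..<9])" by simp
    moreover have "filter (\<lambda>k. 2 \<le> k) c = map (\<lambda>j. c!j) (filter (\<lambda>j. 2 \<le> c!j) [0..<9])"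
      by (subst cm) (simp add: filter_map o_def)
    ultimately show ?thesis unfolding pv by simp
  qed
  have X2: "X < 2" "c!0 = X" "c!8 = 1 - X" using uc unfolding ucode_def by auto
  have hd: "hd (path_verts L f) = f 0" unfolding pv by (simp add: upt_rec)
  have lst: "last (path_verts L f) = f 8" unfolding pv by (simp add: upt_rec numeral_eq_Suc)
  have xy: "is_XY_path (cls X) (cls (1-X)) (path_verts L f)"
  proof -
    have "f 0 \<in> cls X" using fc X2 by (metis le0)
    moreover have "f 8 \<in> cls (1 - X)" using fc X2 by (metis order_refl)
    ultimately show ?thesis unfolding is_XY_path_def hd lst by (simp add: pv)
  qed
  have "is_XY_path A B (path_verts L f) \<or> is_XY_path B A (path_verts L f)"
    using xy X2(1) unfolding cls_def by (cases "X = 0") auto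
  thus ?thesis using nr cnt xy uc unfolding useful_path_def ucode_def by simp
qed

end

context PG begin

definition sp :: "'a \<Rightarrow> 'a \<Rightarrow> bool" where
  "sp x y \<longleftrightarrow> E x y \<and> ((x \<in> tp 2 \<and> y \<in> A \<union> T) \<or> (x \<in> tp 3 \<and> y \<in> B \<union> S))"

lemma hn0: "0 \<le> h * n"
proof -
  have "0 \<le> e1 * real n" using e0 by simp
  thus ?thesis using num r0 by linarith
qed

lemma split_card:
  assumes "X \<inter> Y = {}" "finite X" "finite Y"
  shows "card {w\<in>X \<union> Y. P w} = card {w\<in>X. P w} + card {w\<in>Y. P w}"
proof -
  have "{w\<in>X \<union> Y. P w} = {w\<in>X. P w} \<union> {w\<in>Y. P w}" by blast
  moreover have "{w\<in>X. P w} \<inter> {w\<in>Y. P w} = {}" using assms(1) by blast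
  ultimately show ?thesis using assms(2,3) by (simp add: card_Un_disjoint)
qed

lemma sp_cfg:
  assumes "sp x y"
  shows "\<exists>cf\<in>cfgs. x \<in> tp (fst cf) \<and> y \<in> cls (fst (snd cf)) \<and> h * n / 2 \<le> real (card {w\<in>cls (snd (snd cf)). E w y})"
proof -
  have E: "E x y" using assms unfolding sp_def by simp
  consider (a) "x \<in> tp 2" "y \<in> A" | (b) "x \<in> tp 2" "y \<in> T" | (c) "x \<in> tp 3" "y \<in> B" | (d) "x \<in> tp 3" "y \<in> S"
    using assms unfolding sp_def by blast
  then show ?thesis
  proof cases
    case a
    have "h * n \<le> real (card {w\<in>B. E w y})" using mdA a(2) unfolding indeg_in_def by blast
    hence "h * n / 2 \<le> real (card {w\<in>cls 1. E w y})" using hn0 unfolding cls_def by simp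
    thus ?thesis using a unfolding cfgs_def by (intro bexI[of _ "(2,0,1)"]) (auto simp: cls_def)
  next
    case c
    have "h * n \<le> real (card {w\<in>A. E w y})" using mdB c(2) unfolding indeg_in_def by blast
    hence "h * n / 2 \<le> real (card {w\<in>cls 0. E w y})" using hn0 unfolding cls_def by simp
    thus ?thesis using c unfolding cfgs_def by (intro bexI[of _ "(3,1,0)"]) (auto simp: cls_def)
  next
    case b
    have "h * n \<le> real (card {w\<in>B \<union> T. E w y})" using mdT b(2) unfolding indeg_in_def by blast
    hence "h * n \<le> real (card {w\<in>B. E w y}) + real (card {w\<in>T. E w y})"
      using split_card[OF dBT finB finT] by simp
    hence "h * n / 2 \<le> real (card {w\<in>cls 1. E w y}) \<or> h * n / 2 \<le> real (card {w\<in>cls 3. E w y})"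
      unfolding cls_def by auto
    thus ?thesis
    proof
      assume "h * n / 2 \<le> real (card {w\<in>cls 1. E w y})"
      thus ?thesis using b unfolding cfgs_def by (intro bexI[of _ "(2,3,1)"]) (auto simp: cls_def)
    next
      assume "h * n / 2 \<le> real (card {w\<in>cls 3. E w y})"
      thus ?thesis using b unfolding cfgs_def by (intro bexI[of _ "(2,3,3)"]) (auto simp: cls_def)
    qed
  next
    case d
    have "h * n \<le> real (card {w\<in>A \<union> S. E w y})" using mdS d(2) unfolding indeg_in_def by blast
    hence "h * n \<le> real (card {w\<in>A. E w y}) + real (card {w\<in>S. E w y})"
      using split_card[OF dAS finA finS] by simp
    hence "h * n / 2 \<le> real (card {w\<in>cls 0. E w y}) \<or> h * n / 2 \<le> real (card {w\<in>cls 2. E w y})"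
      unfolding cls_def by auto
    thus ?thesis
    proof
      assume "h * n / 2 \<le> real (card {w\<in>cls 0. E w y})"
      thus ?thesis using d unfolding cfgs_def by (intro bexI[of _ "(3,2,0)"]) (auto simp: cls_def)
    next
      assume "h * n / 2 \<le> real (card {w\<in>cls 2. E w y})"
      thus ?thesis using d unfolding cfgs_def by (intro bexI[of _ "(3,2,2)"]) (auto simp: cls_def)
    qed
  qed
qed

lemma tp_avoid:
  assumes "finite F" "card F \<le> 14"
  shows "\<exists>v. v \<in> tp k \<and> v \<notin> F"
proof (rule ccontr)
  assume "\<not> ?thesis"
  hence "tp k \<subseteq> F" by blast
  hence "card (tp k) \<le> card F" using assms(1) by (rule card_mono[rotated])
  moreover have "0 \<le> e1 * real n" using e0 by simp
  ultimately show False using tp_big[of k] num r0 assms(2) by linarith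
qed

lemma alt_of:
  assumes L8: "length L = 8" and na: "\<not> (\<exists>i. 1 \<le> i \<and> i \<le> 7 \<and> L!(i-1) = L!i)"
  shows "L = alt (L!0)"
proof -
  obtain a0 a1 a2 a3 a4 a5 a6 a7 where L: "L = [a0,a1,a2,a3,a4,a5,a6,a7]"
    using L8 by (auto simp: length_Suc_conv numeral_eq_Suc)
  have na': "\<forall>i. \<not> (1 \<le> i \<and> i \<le> 7 \<and> L!(i-1) = L!i)" using na by blast
  have n1: "L!0 \<noteq> L!1" using spec[OF na', of 1] by simp
  have n2: "L!1 \<noteq> L!2" using spec[OF na', of 2] by simp
  have n3: "L!2 \<noteq> L!3" using spec[OF na', of 3] by simp
  have n4: "L!3 \<noteq> L!4" using spec[OF na', of 4] by simp
  have n5: "L!4 \<noteq> L!5" using spec[OF na', of 5] by simp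
  have n6: "L!5 \<noteq> L!6" using spec[OF na', of 6] by simp
  have n7: "L!6 \<noteq> L!7" using spec[OF na', of 7] by simp
  note nn = n1 n2 n3 n4 n5 n6 n7
  from nn have "a1 = (\<not>a0)" "a2 = (\<not>a1)" "a3 = (\<not>a2)" "a4 = (\<not>a3)" "a5 = (\<not>a4)" "a6 = (\<not>a5)" "a7 = (\<not>a6)"
    unfolding L by auto
  thus ?thesis unfolding L alt_def by simp
qed


lemma path_ok:
  assumes L8: "length L = 8" and X: "X < 2" and spxy: "sp x y" and xF: "x \<in> F" and yF: "y \<in> F"
    and fF: "finite F" and cF: "card F \<le> 13"
  shows "\<exists>f. is_copy V E L f \<and> useful_path A B S T (path_verts L f) \<and> is_XY_path (cls X) (cls (1-X)) (path_verts L f)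
           \<and> (\<forall>j\<le>8. f j \<in> F \<longrightarrow> f j = x \<or> f j = y)"
proof (cases "\<exists>i. 1 \<le> i \<and> i \<le> 7 \<and> L!(i-1) = L!i")
  case True
  then obtain i where i: "1 \<le> i" "i \<le> 7" "L!(i-1) = L!i" by blast
  define c where "c = nc i (L!i) X"
  have nco: "length c = 9" "\<forall>j<9. c ! j < 4" "ucode c X" "pchk L c i i None 0"
    using nc_ok[OF X i(1,2) i(3) refl] unfolding c_def by auto
  obtain v0 where v0: "v0 \<in> tp (c!i)" "v0 \<notin> F" using tp_avoid[OF fF] cF by fastforce
  define f0 where "f0 = (\<lambda>j::nat. v0)"
  have fF': "finite (insert v0 F)" using fF by simp
  have cF': "card (insert v0 F) \<le> 14" using cF fF by (simp add: card_insert_if)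
  have "\<exists>f. is_copy V E L f \<and> (\<forall>j\<le>8. f j \<in> cls (c!j)) \<and> (\<forall>j\<le>8. (j < i \<or> i < j) \<longrightarrow> f j \<notin> insert v0 F)
           \<and> (\<forall>j\<in>{i..i}. f j = f0 j)"
  proof (rule master[OF L8 nco(1) order_refl _ _ _ _ _ _ _ nco(4) fF' cF'])
    show "i \<le> Suc i" by simp
    show "i \<le> 8" using i by simp
    show "inj_on f0 {i..i}" by simp
    show "\<forall>j\<in>{i..i}. f0 j \<in> insert v0 F \<and> f0 j \<in> cls (c!j)" using v0 tp_cls unfolding f0_def by auto
    show "\<forall>j\<in>{i..i}. None \<noteq> Some j \<longrightarrow> f0 j \<in> tp (c!j)" using v0 unfolding f0_def by auto
    show "\<forall>j. None = Some j \<longrightarrow> j \<in> {i..i} \<and> h * n / 2 \<le> real (card {w\<in>cls 0. E w (f0 j)})" by simp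
    show "i < i \<longrightarrow> (if L!i then E (f0 i) (f0 i) else E (f0 i) (f0 i))" by simp
  qed
  then obtain f where f: "is_copy V E L f" "\<forall>j\<le>8. f j \<in> cls (c!j)" "\<forall>j\<le>8. (j < i \<or> i < j) \<longrightarrow> f j \<notin> insert v0 F"
    "\<forall>j\<in>{i..i}. f j = f0 j" by blast
  have nF: "\<forall>j\<le>8. f j \<notin> F"
  proof (intro allI impI)
    fix j :: nat assume j: "j \<le> 8"
    show "f j \<notin> F"
    proof (cases "j = i")
      case True thus ?thesis using f(4) v0 unfolding f0_def by simp
    next
      case False thus ?thesis using f(3) j by auto
    qed
  qed
  have "useful_path A B S T (path_verts L f) \<and> is_XY_path (cls X) (cls (1-X)) (path_verts L f)"
    by (rule useful_codes[OF nco(1,2) f(2) L8 nco(3)])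
  thus ?thesis using f(1) nF by blast
next
  case False
  have La: "L = alt (L!0)" by (rule alt_of[OF L8 False])
  obtain cf where cf: "cf \<in> cfgs" "x \<in> tp (fst cf)" "y \<in> cls (fst (snd cf))"
    "h * n / 2 \<le> real (card {w\<in>cls (snd (snd cf)). E w y})" using sp_cfg[OF spxy] by blast
  obtain c ix iy where pp: "PP (alt (L!0)) X cf c ix iy" using pat_ex[OF X cf(1)] by blast
  hence ppL: "PP L X cf c ix iy" using La by simp
  note P = ppL[unfolded PP_def]
  have c9: "length c = 9" and c4: "\<forall>j<9. c!j < 4" and uc: "ucode c X" and cx: "c!ix = fst cf"
    and cy: "c!iy = fst (snd cf)" and adj: "ix = Suc iy \<or> iy = Suc ix" and ix8: "ix \<le> 8" and iy8: "iy \<le> 8"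
    and Lm: "L ! (min ix iy) = (ix < iy)" and pc: "pchk L c (min ix iy) (max ix iy) (Some iy) (snd (snd cf))"
    using P by auto
  have Exy: "E x y" and xy: "x \<noteq> y" using spxy E_V unfolding sp_def by auto
  define f0 where "f0 = (\<lambda>j. if j = ix then x else y)"
  have rng: "{min ix iy..max ix iy} = {ix, iy}" using adj by auto
  have ixy: "ix \<noteq> iy" using adj by auto
  have "\<exists>f. is_copy V E L f \<and> (\<forall>j\<le>8. f j \<in> cls (c!j)) \<and> (\<forall>j\<le>8. (j < min ix iy \<or> max ix iy < j) \<longrightarrow> f j \<notin> F)
           \<and> (\<forall>j\<in>{min ix iy..max ix iy}. f j = f0 j)"
  proof (rule master[OF L8 c9 _ _ _ _ _ _ _ _ pc fF])
    show "min ix iy \<le> max ix iy" by simp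
    show "max ix iy \<le> Suc (min ix iy)" using adj by auto
    show "max ix iy \<le> 8" using ix8 iy8 by simp
    show "inj_on f0 {min ix iy..max ix iy}" unfolding rng f0_def using xy ixy by (auto simp: inj_on_def)
    show "\<forall>j\<in>{min ix iy..max ix iy}. f0 j \<in> F \<and> f0 j \<in> cls (c!j)"
      unfolding rng f0_def using xF yF cf(2,3) cx cy tp_cls ixy by auto
    show "\<forall>j\<in>{min ix iy..max ix iy}. Some iy \<noteq> Some j \<longrightarrow> f0 j \<in> tp (c!j)"
      unfolding rng f0_def using cf(2) cx by auto
    show "\<forall>j. Some iy = Some j \<longrightarrow> j \<in> {min ix iy..max ix iy} \<and> h * n / 2 \<le> real (card {w\<in>cls (snd (snd cf)). E w (f0 j)})"
      unfolding rng f0_def using cf(4) ixy by auto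
    show "min ix iy < max ix iy \<longrightarrow> (if L!(min ix iy) then E (f0 (min ix iy)) (f0 (max ix iy)) else E (f0 (max ix iy)) (f0 (min ix iy)))"
      using Lm Exy ixy unfolding f0_def by (cases "ix < iy") (auto simp: min_def max_def)
    show "card F \<le> 14" using cF by simp
  qed
  then obtain f where f: "is_copy V E L f" "\<forall>j\<le>8. f j \<in> cls (c!j)"
    "\<forall>j\<le>8. (j < min ix iy \<or> max ix iy < j) \<longrightarrow> f j \<notin> F" "\<forall>j\<in>{min ix iy..max ix iy}. f j = f0 j" by blast
  have nF: "\<forall>j\<le>8. f j \<in> F \<longrightarrow> f j = x \<or> f j = y"
  proof (intro allI impI)
    fix j :: nat assume j: "j \<le> 8" "f j \<in> F"
    hence "j \<in> {min ix iy..max ix iy}" using f(3) by force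
    thus "f j = x \<or> f j = y" using f(4) unfolding f0_def by auto
  qed
  have "useful_path A B S T (path_verts L f) \<and> is_XY_path (cls X) (cls (1-X)) (path_verts L f)"
    by (rule useful_codes[OF c9 c4 f(2) L8 uc])
  thus ?thesis using f(1) nF by blast
qed

lemma nsum: "real n = real (card A) + real (card B) + real (card S) + real (card T)"
proof -
  have "card V = card (A \<union> B \<union> S \<union> T)" using cov by simp
  also have "\<dots> = card (A \<union> B \<union> S) + card T"
    using dAT dBT dST finA finB finS finT by (intro card_Un_disjoint) auto
  also have "card (A \<union> B \<union> S) = card (A \<union> B) + card S"
    using dAS dBS finA finB finS by (intro card_Un_disjoint) auto
  also have "card (A \<union> B) = card A + card B" using dAB finA finB by (intro card_Un_disjoint) auto
  finally show ?thesis using cV by simp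
qed

lemma out_split:
  assumes x: "x \<in> P" and PQ: "P \<inter> Q = {}" "P \<union> Q = V" and fP: "finite P" and fQ: "finite Q"
  shows "real n / 2 - real (card P) + 1 \<le> real (card {y\<in>Q. E x y})"
proof -
  have xV: "x \<in> V" using x PQ by auto
  have "real n / 2 \<le> real (outdeg_in E V x)" using deg xV unfolding min_semideg_ge_def by blast
  moreover have "outdeg_in E V x = card {y\<in>P. E x y} + card {y\<in>Q. E x y}"
    unfolding outdeg_in_def using split_card[OF PQ(1) fP fQ] PQ(2) by simp
  moreover have "card {y\<in>P. E x y} \<le> card (P - {x})"
    using fP E_V by (intro card_mono) auto
  moreover have "card (P - {x}) = card P - 1" using x fP by simp
  moreover have "1 \<le> card P" using x fP by (metis One_nat_def Suc_leI card_gt_0_iff empty_iff)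
  ultimately show ?thesis by (simp add: of_nat_diff)
qed

lemma kS: "x \<in> S \<Longrightarrow> real n / 2 - real (card B) - real (card S) + 1 \<le> real (card {y\<in>A \<union> T. E x y})"
  using out_split[of x "B \<union> S" "A \<union> T"] cov dAB dAS dAT dBS dBT dST finA finB finS finT cBS
  by (fastforce simp: Int_Un_distrib Int_Un_distrib2 Int_commute)

lemma kT: "x \<in> T \<Longrightarrow> real n / 2 - real (card A) - real (card T) + 1 \<le> real (card {y\<in>B \<union> S. E x y})"
  using out_split[of x "A \<union> T" "B \<union> S"] cov dAB dAS dAT dBS dBT dST finA finB finS finT cAT
  by (fastforce simp: Int_Un_distrib Int_Un_distrib2 Int_commute)

lemma ne1: "1 \<le> real (card {y\<in>Z. E x y}) \<Longrightarrow> \<exists>y\<in>Z. E x y"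
  by (metis (no_types, lifting) card.empty empty_Collect_eq of_nat_0 not_one_le_zero)

lemma ne2:
  assumes "1 < real (card {y\<in>Z. E x y})" "finite Z"
  shows "\<exists>y\<in>Z. E x y \<and> y \<noteq> z"
proof (rule ccontr)
  assume "\<not> ?thesis"
  hence "{y\<in>Z. E x y} \<subseteq> {z}" by blast
  hence "card {y\<in>Z. E x y} \<le> 1" by (metis card.empty card_insert_disjoint card_mono empty_iff finite.emptyI finite.insertI One_nat_def)
  thus False using assms(1) by simp
qed

lemma two_sp: "\<exists>x1 y1 x2 y2. sp x1 y1 \<and> sp x2 y2 \<and> x1 \<noteq> x2 \<and> x1 \<noteq> y2 \<and> y1 \<noteq> x2 \<and> y1 \<noteq> y2"
proof -
  have ATf: "finite (A \<union> T)" and BSf: "finite (B \<union> S)" using finA finB finS finT by auto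
  have tp2S: "tp 2 \<subseteq> S" using tp_cls[of 2] unfolding cls_def by simp
  have tp3T: "tp 3 \<subseteq> T" using tp_cls[of 3] unfolding cls_def by simp
  define \<alpha> where "\<alpha> = real n / 2 - real (card B) - real (card S) + 1"
  define \<beta> where "\<beta> = real n / 2 - real (card A) - real (card T) + 1"
  have ab: "\<alpha> + \<beta> = 2" unfolding \<alpha>_def \<beta>_def using nsum by simp
  have kS': "\<And>x. x \<in> S \<Longrightarrow> \<alpha> \<le> real (card {y\<in>A \<union> T. E x y})" using kS unfolding \<alpha>_def by blast
  have kT': "\<And>x. x \<in> T \<Longrightarrow> \<beta> \<le> real (card {y\<in>B \<union> S. E x y})" using kT unfolding \<beta>_def by blast
  obtain s1 where s1: "s1 \<in> tp 2" using tp_avoid[of "{}"] by auto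
  obtain s2 where s2: "s2 \<in> tp 2" "s2 \<notin> {s1}" using tp_avoid[of "{s1}"] by auto
  obtain t1 where t1: "t1 \<in> tp 3" using tp_avoid[of "{}"] by auto
  obtain t2 where t2: "t2 \<in> tp 3" "t2 \<notin> {t1}" using tp_avoid[of "{t1}"] by auto
  have mem: "s1 \<in> S" "s2 \<in> S" "t1 \<in> T" "t2 \<in> T" using s1 s2 t1 t2 tp2S tp3T by auto
  have dis: "\<And>u v. u \<in> S \<Longrightarrow> v \<in> A \<union> T \<Longrightarrow> u \<noteq> v" "\<And>u v. u \<in> T \<Longrightarrow> v \<in> B \<union> S \<Longrightarrow> u \<noteq> v"
    "\<And>u v. u \<in> S \<Longrightarrow> v \<in> T \<Longrightarrow> u \<noteq> v" "\<And>u v. u \<in> A \<union> T \<Longrightarrow> v \<in> B \<union> S \<Longrightarrow> u \<noteq> v"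
    using dAB dAS dAT dBS dBT dST by auto
  consider (a) "1 < \<alpha>" | (b) "1 < \<beta>" | (c) "1 \<le> \<alpha>" "1 \<le> \<beta>" using ab by linarith
  then show ?thesis
  proof cases
    case a
    obtain y1 where y1: "y1 \<in> A \<union> T" "E s1 y1" using ne1[of "A \<union> T" s1] kS' s1 tp2S a by force
    obtain y2 where y2: "y2 \<in> A \<union> T" "E s2 y2" "y2 \<noteq> y1" using ne2[OF _ ATf, of s2 y1] kS' s2 tp2S a by force
    show ?thesis
      by (rule exI[of _ s1], rule exI[of _ y1], rule exI[of _ s2], rule exI[of _ y2])
        (use s1 s2 y1 y2 tp2S dis mem dAB dAS dAT dBS dBT dST in \<open>auto simp: sp_def\<close>)
  next
    case b
    obtain y1 where y1: "y1 \<in> B \<union> S" "E t1 y1" using ne1[of "B \<union> S" t1] kT' t1 tp3T b by force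
    obtain y2 where y2: "y2 \<in> B \<union> S" "E t2 y2" "y2 \<noteq> y1" using ne2[OF _ BSf, of t2 y1] kT' t2 tp3T b by force
    show ?thesis
      by (rule exI[of _ t1], rule exI[of _ y1], rule exI[of _ t2], rule exI[of _ y2])
        (use t1 t2 y1 y2 tp3T dis mem dAB dAS dAT dBS dBT dST in \<open>auto simp: sp_def\<close>)
  next
    case c
    have NS: "\<And>x. x \<in> tp 2 \<Longrightarrow> \<exists>y\<in>A \<union> T. E x y" using ne1 kS' tp2S c by (meson order_trans subsetD)
    have NT: "\<And>x. x \<in> tp 3 \<Longrightarrow> \<exists>y\<in>B \<union> S. E x y" using ne1 kT' tp3T c by (meson order_trans subsetD)
    obtain y2 where y2: "y2 \<in> B \<union> S" "E t1 y2" using NT[OF t1] by blast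
    obtain x1 where x1: "x1 \<in> tp 2" "x1 \<notin> {y2}" using tp_avoid[of "{y2}"] by auto
    obtain y1 where y1: "y1 \<in> A \<union> T" "E x1 y1" using NS[OF x1(1)] by blast
    show ?thesis
    proof (cases "y1 = t1")
      case False
      show ?thesis
        by (rule exI[of _ x1], rule exI[of _ y1], rule exI[of _ t1], rule exI[of _ y2])
          (use x1 t1 y1 y2 tp2S tp3T dis mem False dAB dAS dAT dBS dBT dST in \<open>auto simp: sp_def\<close>)
    next
      case True
      obtain x2' where x2': "x2' \<in> tp 3" "x2' \<notin> {t1}" using tp_avoid[of "{t1}"] by auto
      obtain y2' where y2': "y2' \<in> B \<union> S" "E x2' y2'" using NT[OF x2'(1)] by blast
      show ?thesis
      proof (cases "y2' = x1")
        case False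
        show ?thesis
          by (rule exI[of _ x1], rule exI[of _ t1], rule exI[of _ x2'], rule exI[of _ y2'])
            (use x1 t1 y1 True x2' y2' tp2S tp3T dis mem False dAB dAS dAT dBS dBT dST in \<open>auto simp: sp_def\<close>)
      next
        case True2: True
        obtain x1' where x1': "x1' \<in> tp 2" "x1' \<notin> {x1}" using tp_avoid[of "{x1}"] by auto
        obtain y1' where y1': "y1' \<in> A \<union> T" "E x1' y1'" using NS[OF x1'(1)] by blast
        show ?thesis
        proof (cases "y1' = x2'")
          case False
          show ?thesis
            by (rule exI[of _ x2'], rule exI[of _ x1], rule exI[of _ x1'], rule exI[of _ y1'])
              (use x1 x1' x2' y2' True2 y1' tp2S tp3T dis mem False dAB dAS dAT dBS dBT dST in \<open>auto simp: sp_def\<close>)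
        next
          case True3: True
          show ?thesis
            by (rule exI[of _ x1], rule exI[of _ t1], rule exI[of _ x1'], rule exI[of _ x2'])
              (use x1 x1' x2' t1 y1 True y1' True3 tp2S tp3T dis mem dAB dAS dAT dBS dBT dST in \<open>auto simp: sp_def\<close>)
        qed
      qed
    qed
  qed
qed
end
theorem proposition7p3:
  "\<forall>\<tau>>0. \<tau> \<le> 1 \<longrightarrow> (\<exists>\<eta>0>0. \<forall>\<eta>\<^sub>1. 0 < \<eta>\<^sub>1 \<and> \<eta>\<^sub>1 \<le> \<eta>0 \<longrightarrow>
   (\<exists>\<epsilon>10>0. \<forall>\<epsilon>\<^sub>1. 0 < \<epsilon>\<^sub>1 \<and> \<epsilon>\<^sub>1 \<le> \<epsilon>10 \<longrightarrow>
   (\<exists>\<epsilon>0>0. \<forall>\<epsilon>. 0 < \<epsilon> \<and> \<epsilon> \<le> \<epsilon>0 \<longrightarrow>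
   (\<exists>N::nat. \<forall>n\<ge>N. \<forall>(V::'a set) E A B S T (L1::bool list) (L2::bool list) (sw1::bool) (sw2::bool).
      digraph V E \<and> card V = n \<and> min_semideg_ge V E (real n / 2) \<and>
      A \<inter> B = {} \<and> A \<inter> S = {} \<and> A \<inter> T = {} \<and> B \<inter> S = {} \<and> B \<inter> T = {} \<and> S \<inter> T = {} \<and>
      A \<union> B \<union> S \<union> T = V \<and>
      ABST_conditions V E A B S T n \<tau> \<epsilon>\<^sub>1 \<eta>\<^sub>1 \<epsilon> \<and>
      length L1 = 8 \<and> length L2 = 8
      \<longrightarrow> (\<exists>f1 f2. is_copy V E L1 f1 \<and> is_copy V E L2 f2 \<and>
            f1 ` {0..8} \<inter> f2 ` {0..8} = {} \<and>
            useful_path A B S T (path_verts L1 f1) \<and> useful_path A B S T (path_verts L2 f2) \<and>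
            is_XY_path (if sw1 then B else A) (if sw1 then A else B) (path_verts L1 f1) \<and>
            is_XY_path (if sw2 then B else A) (if sw2 then A else B) (path_verts L2 f2))))))"
proof (intro allI impI)
  fix \<tau> :: real assume \<tau>: "0 < \<tau>" "\<tau> \<le> 1"
  show "\<exists>\<eta>0>0. \<forall>\<eta>\<^sub>1. 0 < \<eta>\<^sub>1 \<and> \<eta>\<^sub>1 \<le> \<eta>0 \<longrightarrow>
   (\<exists>\<epsilon>10>0. \<forall>\<epsilon>\<^sub>1. 0 < \<epsilon>\<^sub>1 \<and> \<epsilon>\<^sub>1 \<le> \<epsilon>10 \<longrightarrow>
   (\<exists>\<epsilon>0>0. \<forall>\<epsilon>. 0 < \<epsilon> \<and> \<epsilon> \<le> \<epsilon>0 \<longrightarrow>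
   (\<exists>N::nat. \<forall>n\<ge>N. \<forall>(V::'a set) E A B S T (L1::bool list) (L2::bool list) (sw1::bool) (sw2::bool).
      digraph V E \<and> card V = n \<and> min_semideg_ge V E (real n / 2) \<and>
      A \<inter> B = {} \<and> A \<inter> S = {} \<and> A \<inter> T = {} \<and> B \<inter> S = {} \<and> B \<inter> T = {} \<and> S \<inter> T = {} \<and>
      A \<union> B \<union> S \<union> T = V \<and>
      ABST_conditions V E A B S T n \<tau> \<epsilon>\<^sub>1 \<eta>\<^sub>1 \<epsilon> \<and>
      length L1 = 8 \<and> length L2 = 8
      \<longrightarrow> (\<exists>f1 f2. is_copy V E L1 f1 \<and> is_copy V E L2 f2 \<and>
            f1 ` {0..8} \<inter> f2 ` {0..8} = {} \<and>
            useful_path A B S T (path_verts L1 f1) \<and> useful_path A B S T (path_verts L2 f2) \<and>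
            is_XY_path (if sw1 then B else A) (if sw1 then A else B) (path_verts L1 f1) \<and>
            is_XY_path (if sw2 then B else A) (if sw2 then A else B) (path_verts L2 f2)))))"
  proof (rule exI[of _ \<tau>], intro conjI allI impI)
    show "0 < \<tau>" by (rule \<tau>(1))
    fix \<eta>1 :: real assume h: "0 < \<eta>1 \<and> \<eta>1 \<le> \<tau>"
    show "\<exists>\<epsilon>10>0. \<forall>\<epsilon>\<^sub>1. 0 < \<epsilon>\<^sub>1 \<and> \<epsilon>\<^sub>1 \<le> \<epsilon>10 \<longrightarrow>
   (\<exists>\<epsilon>0>0. \<forall>\<epsilon>. 0 < \<epsilon> \<and> \<epsilon> \<le> \<epsilon>0 \<longrightarrow>
   (\<exists>N::nat. \<forall>n\<ge>N. \<forall>(V::'a set) E A B S T (L1::bool list) (L2::bool list) (sw1::bool) (sw2::bool).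
      digraph V E \<and> card V = n \<and> min_semideg_ge V E (real n / 2) \<and>
      A \<inter> B = {} \<and> A \<inter> S = {} \<and> A \<inter> T = {} \<and> B \<inter> S = {} \<and> B \<inter> T = {} \<and> S \<inter> T = {} \<and>
      A \<union> B \<union> S \<union> T = V \<and>
      ABST_conditions V E A B S T n \<tau> \<epsilon>\<^sub>1 \<eta>1 \<epsilon> \<and>
      length L1 = 8 \<and> length L2 = 8
      \<longrightarrow> (\<exists>f1 f2. is_copy V E L1 f1 \<and> is_copy V E L2 f2 \<and>
            f1 ` {0..8} \<inter> f2 ` {0..8} = {} \<and>
            useful_path A B S T (path_verts L1 f1) \<and> useful_path A B S T (path_verts L2 f2) \<and>
            is_XY_path (if sw1 then B else A) (if sw1 then A else B) (path_verts L1 f1) \<and>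
            is_XY_path (if sw2 then B else A) (if sw2 then A else B) (path_verts L2 f2))))"
    proof (rule exI[of _ "\<eta>1/8"], intro conjI allI impI)
      show "0 < \<eta>1/8" using h by simp
      fix e1 :: real assume e1: "0 < e1 \<and> e1 \<le> \<eta>1/8"
      show "\<exists>\<epsilon>0>0. \<forall>\<epsilon>. 0 < \<epsilon> \<and> \<epsilon> \<le> \<epsilon>0 \<longrightarrow>
   (\<exists>N::nat. \<forall>n\<ge>N. \<forall>(V::'a set) E A B S T (L1::bool list) (L2::bool list) (sw1::bool) (sw2::bool).
      digraph V E \<and> card V = n \<and> min_semideg_ge V E (real n / 2) \<and>
      A \<inter> B = {} \<and> A \<inter> S = {} \<and> A \<inter> T = {} \<and> B \<inter> S = {} \<and> B \<inter> T = {} \<and> S \<inter> T = {} \<and>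
      A \<union> B \<union> S \<union> T = V \<and>
      ABST_conditions V E A B S T n \<tau> e1 \<eta>1 \<epsilon> \<and>
      length L1 = 8 \<and> length L2 = 8
      \<longrightarrow> (\<exists>f1 f2. is_copy V E L1 f1 \<and> is_copy V E L2 f2 \<and>
            f1 ` {0..8} \<inter> f2 ` {0..8} = {} \<and>
            useful_path A B S T (path_verts L1 f1) \<and> useful_path A B S T (path_verts L2 f2) \<and>
            is_XY_path (if sw1 then B else A) (if sw1 then A else B) (path_verts L1 f1) \<and>
            is_XY_path (if sw2 then B else A) (if sw2 then A else B) (path_verts L2 f2)))"
      proof (rule exI[of _ "(\<eta>1/8)^3"], intro conjI allI impI)
        show "0 < (\<eta>1/8)^3" using h by simp
        fix \<epsilon> :: real assume e: "0 < \<epsilon> \<and> \<epsilon> \<le> (\<eta>1/8)^3"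
        show "\<exists>N::nat. \<forall>n\<ge>N. \<forall>(V::'a set) E A B S T (L1::bool list) (L2::bool list) (sw1::bool) (sw2::bool).
      digraph V E \<and> card V = n \<and> min_semideg_ge V E (real n / 2) \<and>
      A \<inter> B = {} \<and> A \<inter> S = {} \<and> A \<inter> T = {} \<and> B \<inter> S = {} \<and> B \<inter> T = {} \<and> S \<inter> T = {} \<and>
      A \<union> B \<union> S \<union> T = V \<and>
      ABST_conditions V E A B S T n \<tau> e1 \<eta>1 \<epsilon> \<and>
      length L1 = 8 \<and> length L2 = 8
      \<longrightarrow> (\<exists>f1 f2. is_copy V E L1 f1 \<and> is_copy V E L2 f2 \<and>
            f1 ` {0..8} \<inter> f2 ` {0..8} = {} \<and>
            useful_path A B S T (path_verts L1 f1) \<and> useful_path A B S T (path_verts L2 f2) \<and>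
            is_XY_path (if sw1 then B else A) (if sw1 then A else B) (path_verts L1 f1) \<and>
            is_XY_path (if sw2 then B else A) (if sw2 then A else B) (path_verts L2 f2))"
        proof (rule exI[of _ "nat \<lceil>100 / \<eta>1\<rceil>"], intro allI impI)
          fix n :: nat and V :: "'a set" and E A B S T and L1 L2 :: "bool list" and sw1 sw2 :: bool
          assume nN: "nat \<lceil>100 / \<eta>1\<rceil> \<le> n"
          assume H: "digraph V E \<and> card V = n \<and> min_semideg_ge V E (real n / 2) \<and>
            A \<inter> B = {} \<and> A \<inter> S = {} \<and> A \<inter> T = {} \<and> B \<inter> S = {} \<and> B \<inter> T = {} \<and> S \<inter> T = {} \<and>
            A \<union> B \<union> S \<union> T = V \<and> ABST_conditions V E A B S T n \<tau> e1 \<eta>1 \<epsilon> \<and> length L1 = 8 \<and> length L2 = 8"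
          define r where "r = \<epsilon> powr (1/3) * real n"
          have AB: "ABST_conditions V E A B S T n \<tau> e1 \<eta>1 \<epsilon>" using H by blast
          note AB' = AB[unfolded ABST_conditions_def Let_def r_def[symmetric]]
          have h0: "0 < \<eta>1" "\<eta>1 \<le> \<tau>" using h by auto
          have nb: "100 / \<eta>1 \<le> real n" using nN by linarith
          hence hn100: "100 \<le> \<eta>1 * real n" using h0 by (simp add: field_simps)
          have pw: "\<epsilon> powr (1/3) \<le> \<eta>1/8"
          proof -
            have "\<epsilon> powr (1/3) \<le> ((\<eta>1/8)^3) powr (1/3)" using e by (intro powr_mono2) auto
            also have "((\<eta>1/8)^3) powr (1/3) = \<eta>1/8"
            proof -
              have q: "(\<eta>1/8)^3 = (\<eta>1/8) powr 3" using h0 by (simp add: powr_numeral)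
              have "((\<eta>1/8) powr 3) powr (1/3) = (\<eta>1/8) powr (3 * (1/3))" by (simp add: powr_powr)
              also have "\<dots> = \<eta>1/8" using h0 by simp
              finally show ?thesis using q by simp
            qed
            finally show ?thesis .
          qed
          have r0: "0 \<le> r" unfolding r_def by simp
          have rb: "r \<le> \<eta>1/8 * real n" unfolding r_def using pw by (intro mult_right_mono) auto
          have eb: "e1 * real n \<le> \<eta>1/8 * real n" using e1 by (intro mult_right_mono) auto
          have tn: "\<eta>1 * real n \<le> \<tau> * real n" using h0 by (intro mult_right_mono) auto
          interpret P: PG V E A B S T n r e1 \<eta>1
          proof (unfold_locales)
            show "digraph V E" "card V = n" "min_semideg_ge V E (real n / 2)" using H by auto
            show "A \<inter> B = {}" "A \<inter> S = {}" "A \<inter> T = {}" "B \<inter> S = {}" "B \<inter> T = {}" "S \<inter> T = {}"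
              "A \<union> B \<union> S \<union> T = V" using H by auto
            show "\<eta>1 * n \<le> real (card A)" "\<eta>1 * n \<le> real (card B)" "\<eta>1 * n \<le> real (card S)" "\<eta>1 * n \<le> real (card T)"
              using AB' tn by linarith+
            show "\<forall>x\<in>A. \<eta>1 * n \<le> real (outdeg_in E B x) \<and> \<eta>1 * n \<le> real (indeg_in E B x)"
              "\<forall>x\<in>B. \<eta>1 * n \<le> real (outdeg_in E A x) \<and> \<eta>1 * n \<le> real (indeg_in E A x)"
              "\<forall>x\<in>S. \<eta>1 * n \<le> real (outdeg_in E (B \<union> S) x) \<and> \<eta>1 * n \<le> real (indeg_in E (A \<union> S) x)"
              "\<forall>x\<in>T. \<eta>1 * n \<le> real (outdeg_in E (A \<union> T) x) \<and> \<eta>1 * n \<le> real (indeg_in E (B \<union> T) x)"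
              using AB' by blast+
            show "real (card {x\<in>A. \<not> (real (outdeg_in E B x) \<ge> real (card B) - r \<and> real (indeg_in E B x) \<ge> real (card B) - r)}) \<le> e1 * n"
              "real (card {x\<in>B. \<not> (real (outdeg_in E A x) \<ge> real (card A) - r \<and> real (indeg_in E A x) \<ge> real (card A) - r)}) \<le> e1 * n"
              "real (card {x\<in>S. \<not> (real (outdeg_in E (B \<union> S) x) \<ge> real (card B) + real (card S) - r \<and> real (indeg_in E (A \<union> S) x) \<ge> real (card A) + real (card S) - r)}) \<le> e1 * n"
              "real (card {x\<in>T. \<not> (real (outdeg_in E (A \<union> T) x) \<ge> real (card A) + real (card T) - r \<and> real (indeg_in E (B \<union> T) x) \<ge> real (card B) + real (card T) - r)}) \<le> e1 * n"
              using AB' by blast+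
            show "r + 23 < \<eta>1 * n / 2 - e1 * n" using rb eb hn100 by linarith
            show "0 \<le> r" by (rule r0)
            show "0 \<le> e1" using e1 by simp
          qed
          obtain x1 y1 x2 y2 where sp: "P.sp x1 y1" "P.sp x2 y2" and ds: "x1 \<noteq> x2" "x1 \<noteq> y2" "y1 \<noteq> x2" "y1 \<noteq> y2"
            using P.two_sp by blast
          define X1 where "X1 = (if sw1 then 1 else 0::nat)"
          define X2 where "X2 = (if sw2 then 1 else 0::nat)"
          have X1: "X1 < 2" and X2: "X2 < 2" unfolding X1_def X2_def by auto
          have L1: "length L1 = 8" and L2: "length L2 = 8" using H by auto
          define F1 where "F1 = {x1, y1, x2, y2}"
          have F1f: "finite F1" unfolding F1_def by simp
          have "card F1 \<le> 4" unfolding F1_def using card_length[of "[x1,y1,x2,y2]"] by simp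
          hence F1c: "card F1 \<le> 13" by simp
          obtain f1 where f1: "is_copy V E L1 f1" "useful_path A B S T (path_verts L1 f1)"
            "is_XY_path (P.cls X1) (P.cls (1-X1)) (path_verts L1 f1)" "\<forall>j\<le>8. f1 j \<in> F1 \<longrightarrow> f1 j = x1 \<or> f1 j = y1"
            using P.path_ok[OF L1 X1 sp(1) _ _ F1f F1c] unfolding F1_def by blast
          define F2 where "F2 = f1 ` {0..8} \<union> {x2, y2}"
          have F2f: "finite F2" unfolding F2_def by simp
          have "card F2 \<le> card (f1 ` {0..8}) + card {x2, y2}" unfolding F2_def by (rule card_Un_le)
          moreover have "card (f1 ` {0..8::nat}) \<le> 9" using card_image_le[of "{0..8::nat}" f1] by simp
          moreover have "card {x2, y2} \<le> 2" using card_length[of "[x2,y2]"] by simp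
          ultimately have F2c: "card F2 \<le> 13" by linarith
          obtain f2 where f2: "is_copy V E L2 f2" "useful_path A B S T (path_verts L2 f2)"
            "is_XY_path (P.cls X2) (P.cls (1-X2)) (path_verts L2 f2)" "\<forall>j\<le>8. f2 j \<in> F2 \<longrightarrow> f2 j = x2 \<or> f2 j = y2"
            using P.path_ok[OF L2 X2 sp(2) _ _ F2f F2c] unfolding F2_def by blast
          have dj: "f1 ` {0..8} \<inter> f2 ` {0..8} = {}"
          proof (rule ccontr)
            assume "f1 ` {0..8} \<inter> f2 ` {0..8} \<noteq> {}"
            then obtain j1 j2 where j: "j1 \<le> 8" "j2 \<le> 8" "f1 j1 = f2 j2" by auto
            have "f2 j2 \<in> F2" unfolding F2_def using j by (metis UnI1 atLeastAtMost_iff image_eqI le0)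
            hence z2: "f2 j2 = x2 \<or> f2 j2 = y2" using f2(4) j by blast
            hence "f1 j1 \<in> F1" using j unfolding F1_def by auto
            hence "f1 j1 = x1 \<or> f1 j1 = y1" using f1(4) j by blast
            thus False using z2 j ds by auto
          qed
          have c1: "P.cls X1 = (if sw1 then B else A)" "P.cls (1 - X1) = (if sw1 then A else B)"
            unfolding X1_def P.cls_def by auto
          have c2: "P.cls X2 = (if sw2 then B else A)" "P.cls (1 - X2) = (if sw2 then A else B)"
            unfolding X2_def P.cls_def by auto
          have xy1: "is_XY_path (if sw1 then B else A) (if sw1 then A else B) (path_verts L1 f1)" using f1(3) unfolding c1 .
          have xy2: "is_XY_path (if sw2 then B else A) (if sw2 then A else B) (path_verts L2 f2)" using f2(3) unfolding c2 .
          show "\<exists>f1 f2. is_copy V E L1 f1 \<and> is_copy V E L2 f2 \<and>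
            f1 ` {0..8} \<inter> f2 ` {0..8} = {} \<and>
            useful_path A B S T (path_verts L1 f1) \<and> useful_path A B S T (path_verts L2 f2) \<and>
            is_XY_path (if sw1 then B else A) (if sw1 then A else B) (path_verts L1 f1) \<and>
            is_XY_path (if sw2 then B else A) (if sw2 then A else B) (path_verts L2 f2)"
            by (rule exI[of _ f1], rule exI[of _ f2]) (intro conjI f1(1,2) f2(1,2) dj xy1 xy2)
        qed
      qed
    qed
  qed
qed

end
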